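(* Let $p$ be an odd prime and $\mathbf{k}$ a field of characteristic $p$. Then, in $\mathbf{k}(f,g,\alpha_1,\alpha_2,t)$, $$s_0(\mathcal{I}_p)=\mathcal{I}_p,\quad s_1(\mathcal{I}_p)=\mathcal{I}_p+t^p(\alpha_1^p-\alpha_1),\quad s_2(\mathcal{I}_p)=\mathcal{I}_p-t^p(\alpha_2^p-\alpha_2),\quad \pi(\mathcal{I}_p)=\mathcal{I}_p-t^p(\alpha_2^p-\alpha_2).$$ For $p=2$ the same formulas hold with $t^2$ replaced by $1+t^2$ on the right-hand sides, i.e. $s_0(\mathcal{I}_2)=\mathcal{I}_2$, $s_1(\mathcal{I}_2)=\mathcal{I}_2+(1+t^2)(\alpha_1^2-\alpha_1)$, $s_2(\mathcal{I}_2)=\mathcal{I}_2-(1+t^2)(\alpha_2^2-\alpha_2)$, $\pi(\mathcal{I}_2)=\mathcal{I}_2-(1+t^2)(\alpha_2^2-\alpha_2)$.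
   Context: On $\mathbf{k}(f,g,\alpha_1,\alpha_2,t)$ let $s_0,s_1,s_2,\pi$ be the $\mathbf{k}$-linear field automorphisms fixing $t$ and acting by: $s_0:\ \alpha_1\mapsto 1-\alpha_2,\ \alpha_2\mapsto1-\alpha_1,\ f\mapsto f+\frac{\alpha_1+\alpha_2-1}{f-g+t},\ g\mapsto g+\frac{\alpha_1+\alpha_2-1}{f-g+t}$; $s_1:\ \alpha_1\mapsto-\alpha_1,\ \alpha_2\mapsto\alpha_1+\alpha_2,\ f\mapsto f,\ g\mapsto g-\frac{\alpha_1}{f}$; $s_2:\ \alpha_1\mapsto\alpha_1+\alpha_2,\ \alpha_2\mapsto-\alpha_2,\ f\mapsto f+\frac{\alpha_2}{g},\ g\mapsto g$; $\pi:\ \alpha_1\mapsto\alpha_2,\ \alpha_2\mapsto1-\alpha_1-\alpha_2,\ f\mapsto -g,\ g\mapsto f-g+t$. Define the $2\times2$ matrix polynomial in $z$ $$A(z)=\begin{bmatrix}w&0\\0&1\end{bmatrix}\begin{bmatrix}1&0\\ f-tfg-tz&1\end{bmatrix}\begin{bmatrix}g&1\\ z+\alpha_2&0\end{bmatrix}\begin{bmatrix}-f&1\\ z&0\end{bmatrix}\begin{bmatrix}tz-g+tfg&1\\ z-\alpha_1&0\end{bmatrix}\begin{bmatrix}w^{-1}&0\\0&1\end{bmatrix}$$ and $\mathcal{I}_p:=\operatorname{Tr}[A(p-1)\cdots A(1)A(0)]$ computed in characteristic $p$, an element of $\mathbb{F}_p[f,g,\alpha_1,\alpha_2,t]$ independent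 of $w$, viewed in $\mathbf{k}(f,g,\alpha_1,\alpha_2,t)$. *)

theory Defs
  imports "HOL-Computational_Algebra.Polynomial" "HOL-Computational_Algebra.Fraction_Field"
begin

text \<open>2x2 matrices over a commutative ring, written as (a11, a12, a21, a22).\<close>
type_synonym 'a mat2 = "'a \<times> 'a \<times> 'a \<times> 'a"

fun mmul2 :: "'a::comm_ring_1 mat2 \<Rightarrow> 'a mat2 \<Rightarrow> 'a mat2" where
  "mmul2 (a, b, c, d) (e, f, g, h) = (a*e + b*g, a*f + b*h, c*e + d*g, c*f + d*h)"

fun tr2 :: "'a::comm_ring_1 mat2 \<Rightarrow> 'a" where
  "tr2 (a, b, c, d) = a + d"

definition id2 :: "'a::comm_ring_1 mat2" where
  "id2 = (1, 0, 0, 1)"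

definition Amat :: "'a::field \<Rightarrow> 'a \<Rightarrow> 'a \<Rightarrow> 'a \<Rightarrow> 'a \<Rightarrow> 'a \<Rightarrow> 'a \<Rightarrow> 'a mat2" where
  "Amat w f g a1 a2 t z =
     mmul2 (w, 0, 0, 1)
    (mmul2 (1, 0, f - t*f*g - t*z, 1)
    (mmul2 (g, 1, z + a2, 0)
    (mmul2 (- f, 1, z, 0)
    (mmul2 (t*z - g + t*f*g, 1, z - a1, 0)
           (inverse w, 0, 0, 1)))))"

fun prodA :: "'a::field \<Rightarrow> 'a \<Rightarrow> 'a \<Rightarrow> 'a \<Rightarrow> 'a \<Rightarrow> 'a \<Rightarrow> nat \<Rightarrow> 'a mat2" where
  "prodA w f g a1 a2 t 0 = id2"
| "prodA w f g a1 a2 t (Suc n) = mmul2 (Amat w f g a1 a2 t (of_nat n)) (prodA w f g a1 a2 t n)"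

definition Ip :: "nat \<Rightarrow> 'a::field \<Rightarrow> 'a \<Rightarrow> 'a \<Rightarrow> 'a \<Rightarrow> 'a \<Rightarrow> 'a \<Rightarrow> 'a" where
  "Ip p w f g a1 a2 t = tr2 (prodA w f g a1 a2 t p)"

text \<open>The rational function field k(f,g,alpha1,alpha2,t) as the fraction field of
  k[f][g][alpha1][alpha2][t].\<close>
type_synonym 'k poly5 = "'k poly poly poly poly poly"
type_synonym 'k ratfun5 = "'k poly5 fract"

definition varF :: "'k::field ratfun5" where
  "varF = Fract [:[:[:[:monom 1 1:]:]:]:] 1"
definition varG :: "'k::field ratfun5" where
  "varG = Fract [:[:[:monom 1 1:]:]:] 1"
definition varA1 :: "'k::field ratfun5" where
  "varA1 = Fract [:[:monom 1 1:]:] 1"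
definition varA2 :: "'k::field ratfun5" where
  "varA2 = Fract [:monom 1 1:] 1"
definition varT :: "'k::field ratfun5" where
  "varT = Fract (monom 1 1) 1"

end

theory Submission
  imports Defs "HOL-Number_Theory.Cong"
begin


lemma char_eq_p:
  assumes "prime p" "of_nat p = (0::'a::field)"
  shows "CHAR('a) = p"
proof -
  have "CHAR('a) dvd p" using assms(2) by (simp add: of_nat_eq_0_iff_char_dvd)
  thus ?thesis using assms(1) by (metis CHAR_not_1' One_nat_def prime_nat_iff)
qed

lemma of_nat_zero_iff:
  assumes "prime p" "of_nat p = (0::'a::field)"
  shows "of_nat n = (0::'a) \<longleftrightarrow> p dvd n"
  using char_eq_p[OF assms] by (simp add: of_nat_eq_0_iff_char_dvd)

lemma of_nat_mod_p:
  assumes "of_nat p = (0::'a::comm_ring_1)"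
  shows "of_nat (n mod p) = (of_nat n :: 'a)"
proof -
  have "n = p * (n div p) + n mod p" by simp
  hence "(of_nat n::'a) = of_nat p * of_nat (n div p) + of_nat (n mod p)"
    by (metis of_nat_add of_nat_mult)
  thus ?thesis using assms by simp
qed

lemma of_nat_inj_p:
  assumes "prime p" "of_nat p = (0::'a::field)" "r < p" "s < p" "of_nat r = (of_nat s::'a)"
  shows "r = s"
proof (rule ccontr)
  assume "r \<noteq> s"
  then consider "r < s" | "s < r" by linarith
  thus False
  proof cases
    case 1
    hence "CHAR('a) dvd (s - r)" using assms(5) of_nat_eq_iff_char_dvd by blast
    hence "p dvd (s - r)" using char_eq_p[OF assms(1,2)] by simp
    thus False using 1 assms(4) by (meson diff_less_Suc le_less_trans less_imp_le_nat nat_dvd_not_less not_less_eq zero_less_diff Suc_leI diff_le_self)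
  next
    case 2
    hence "CHAR('a) dvd (r - s)" using assms(5) of_nat_eq_iff_char_dvd by metis
    hence "p dvd (r - s)" using char_eq_p[OF assms(1,2)] by simp
    thus False using 2 assms(3) by (meson diff_le_self le_less_trans nat_dvd_not_less zero_less_diff)
  qed
qed

lemma frob:
  fixes a b :: "'a::comm_ring_1"
  assumes "prime p" "of_nat p = (0::'a)"
  shows "(a + b)^p = a^p + b^p"
proof -
  have p0: "p > 0" using assms(1) prime_gt_0_nat by blast
  have mid: "of_nat (p choose k) = (0::'a)" if "0 < k" "k < p" for k
  proof -
    have "p dvd (p choose k)" using dvd_choose_prime[of k p] that assms(1) by auto
    then obtain m where "p choose k = p * m" by (auto elim: dvdE)
    thus ?thesis using assms(2) by simp
  qed
  have "(a + b)^p = (\<Sum>k\<le>p. of_nat (p choose k) * a^k * b^(p-k))" by (rule binomial_ring)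
  also have "{..p} = insert 0 (insert p {1..<p})" using p0 by auto
  also have "(\<Sum>k\<in>insert 0 (insert p {1..<p}). of_nat (p choose k) * a^k * b^(p-k))
     = b^p + (a^p + (\<Sum>k\<in>{1..<p}. of_nat (p choose k) * a^k * b^(p-k)))"
    using p0 by (simp add: sum.insert)
  also have "(\<Sum>k\<in>{1..<p}. of_nat (p choose k) * a^k * b^(p-k)) = 0"
    by (rule sum.neutral) (auto simp: mid)
  finally show ?thesis by (simp add: add.commute)
qed

lemma frob_diff:
  fixes a b :: "'a::comm_ring_1"
  assumes "prime p" "of_nat p = (0::'a)"
  shows "(a - b)^p = a^p - b^p"
proof -
  have "a^p = ((a - b) + b)^p" by simp
  also have "\<dots> = (a-b)^p + b^p" by (rule frob[OF assms])
  finally show ?thesis by simp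
qed

lemma psum_zero:
  assumes "prime p" "of_nat p = (0::'a::field)" "j < p - 1"
  shows "(\<Sum>r<p. (of_nat r::'a)^j) = 0"
  using assms(3)
proof (induction j rule: less_induct)
  case (less j)
  define S where "S i = (\<Sum>r<p. (of_nat r::'a)^i)" for i
  have IH: "S i = 0" if "i < j" for i using less.IH[of i] that less.prems by (simp add: S_def)
  have tele: "(\<Sum>r<p. (of_nat (Suc r)::'a)^(Suc j) - (of_nat r)^(Suc j)) = 0"
    using sum_lessThan_telescope[of "\<lambda>r. (of_nat r::'a)^(Suc j)" p] assms(2) by simp
  have bin: "(of_nat (Suc r)::'a)^(Suc j) - (of_nat r)^(Suc j) = (\<Sum>i\<le>j. of_nat (Suc j choose i) * (of_nat r)^i)" for r
  proof -
    have "(of_nat (Suc r)::'a)^(Suc j) = (of_nat r + 1)^(Suc j)" by (simp add: add.commute)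
    also have "\<dots> = (\<Sum>i\<le>Suc j. of_nat (Suc j choose i) * (of_nat r)^i * 1^(Suc j - i))"
      by (rule binomial_ring)
    also have "\<dots> = (\<Sum>i\<le>j. of_nat (Suc j choose i) * (of_nat r)^i) + (of_nat r)^(Suc j)"
      by (simp add: sum.atMost_Suc)
    finally show ?thesis by simp
  qed
  have "0 = (\<Sum>r<p. \<Sum>i\<le>j. of_nat (Suc j choose i) * (of_nat r::'a)^i)"
    using tele by (simp only: bin)
  also have "\<dots> = (\<Sum>i\<le>j. of_nat (Suc j choose i) * S i)"
    by (subst sum.swap) (simp add: S_def sum_distrib_left)
  also have "\<dots> = (\<Sum>i<j. of_nat (Suc j choose i) * S i) + of_nat (Suc j) * S j"
    by (simp add: lessThan_Suc_atMost[symmetric] sum.lessThan_Suc)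
  also have "(\<Sum>i<j. of_nat (Suc j choose i) * S i) = 0" by (rule sum.neutral) (auto simp: IH)
  finally have "of_nat (Suc j) * S j = 0" by simp
  moreover have "of_nat (Suc j) \<noteq> (0::'a)"
  proof
    assume "of_nat (Suc j) = (0::'a)"
    hence "p dvd Suc j" using of_nat_zero_iff[OF assms(1,2)] by blast
    moreover have "Suc j < p" using less.prems by linarith
    ultimately show False by (simp add: nat_dvd_not_less)
  qed
  ultimately show ?case by (simp add: S_def)
qed

lemma psum_poly_zero:
  assumes "prime p" "of_nat p = (0::'a::field)" "degree h < p - 1"
  shows "(\<Sum>r<p. poly h (of_nat r::'a)) = 0"
proof -
  have "(\<Sum>r<p. poly h (of_nat r::'a)) = (\<Sum>r<p. \<Sum>i\<le>degree h. coeff h i * (of_nat r)^i)"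
    by (simp add: poly_altdef)
  also have "\<dots> = (\<Sum>i\<le>degree h. coeff h i * (\<Sum>r<p. (of_nat r::'a)^i))"
    by (subst sum.swap) (simp add: sum_distrib_left)
  also have "\<dots> = 0" using psum_zero[OF assms(1,2)] assms(3) by (intro sum.neutral) auto
  finally show ?thesis .
qed

lemma pcompose_sum_coeffs:
  fixes h q :: "'a::comm_ring_1 poly"
  shows "pcompose h q = (\<Sum>i\<le>degree h. smult (coeff h i) (q^i))"
proof -
  have "pcompose h q = poly (map_poly (\<lambda>x. [:x:]) h) q" by (rule pcompose_altdef)
  also have "\<dots> = (\<Sum>i\<le>degree (map_poly (\<lambda>x. [:x:]) h). coeff (map_poly (\<lambda>x. [:x:]) h) i * q^i)"
    by (rule poly_altdef)
  also have "degree (map_poly (\<lambda>x. [:x:]) h) = degree h" by (simp add: degree_map_poly)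
  also have "(\<Sum>i\<le>degree h. coeff (map_poly (\<lambda>x. [:x:]) h) i * q^i) = (\<Sum>i\<le>degree h. smult (coeff h i) (q^i))"
    by (intro sum.cong refl) (simp add: coeff_map_poly)
  finally show ?thesis .
qed

lemma coeff_shift_top:
  fixes h :: "'a::comm_ring_1 poly"
  assumes "degree h = Suc m"
  shows "coeff (pcompose h [:1,1:]) m = coeff h m + of_nat (Suc m) * coeff h (Suc m)"
proof -
  have "coeff (pcompose h [:1,1:]) m = (\<Sum>i\<le>Suc m. coeff h i * coeff ([:1,1:]^i) m)"
    by (subst pcompose_sum_coeffs) (simp add: assms coeff_sum)
  also have "\<dots> = (\<Sum>i<m. coeff h i * coeff ([:1,1:]^i) m) + coeff h m * coeff ([:1,1:]^m) m
       + coeff h (Suc m) * coeff ([:1,1:]^(Suc m)) m"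
    by (simp add: lessThan_Suc_atMost[symmetric] sum.lessThan_Suc)
  also have "(\<Sum>i<m. coeff h i * coeff ([:1,1:]^i) m) = 0"
  proof (rule sum.neutral, safe)
    fix i assume "i < m"
    have "degree ([:1,1:]^i :: 'a poly) \<le> i"
      by (rule order.trans[OF degree_power_le]) simp
    hence "coeff ([:1::'a,1:]^i) m = 0" using \<open>i < m\<close> by (intro coeff_eq_0) simp
    thus "coeff h i * coeff ([:1,1:]^i) m = 0" by simp
  qed
  also have "coeff ([:1::'a,1:]^m) m = 1" using coeff_linear_power[of "1::'a" m] by simp
  also have "coeff ([:1::'a,1:]^(Suc m)) m = of_nat (Suc m)"
    using coeff_linear_poly_power[of m "Suc m" "1::'a" 1] by simp
  finally show ?thesis by (simp add: mult.commute)
qed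

lemma periodic_const:
  fixes h :: "'a::field poly"
  assumes "prime p" "of_nat p = (0::'a)" "pcompose h [:1,1:] = h" "degree h < 2*p" "coeff h p = 0"
  shows "h = [:coeff h 0:]"
proof (cases "degree h")
  case 0
  then obtain a where "h = pCons a 0" by (rule degree_eq_zeroE)
  thus ?thesis by simp
next
  case (Suc m)
  have "coeff (pcompose h [:1,1:]) m = coeff h m + of_nat (Suc m) * coeff h (Suc m)"
    by (rule coeff_shift_top[OF Suc])
  hence "of_nat (Suc m) * coeff h (Suc m) = 0" using assms(3) by simp
  moreover have "coeff h (Suc m) \<noteq> 0"
  proof -
    have "h \<noteq> 0" using Suc by auto
    hence "coeff h (degree h) \<noteq> 0" by simp
    thus ?thesis using Suc by simp
  qed
  ultimately have "of_nat (Suc m) = (0::'a)" by simp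
  hence "p dvd Suc m" using of_nat_zero_iff[OF assms(1,2)] by blast
  then obtain q where q: "Suc m = p * q" by (auto elim: dvdE)
  have "q = 1"
  proof -
    have "q > 0" using q by (cases q) auto
    moreover have "q < 2" using q assms(4) Suc by (metis mult_less_cancel1 mult.commute)
    ultimately show ?thesis by linarith
  qed
  hence "Suc m = p" using q by simp
  thus ?thesis using assms(5) \<open>coeff h (Suc m) \<noteq> 0\<close> by simp
qed


datatype 'a m2 = M2 (e11: 'a) (e12: 'a) (e21: 'a) (e22: 'a)

lemma m2_eqI: "e11 A = e11 B \<Longrightarrow> e12 A = e12 B \<Longrightarrow> e21 A = e21 B \<Longrightarrow> e22 A = e22 B \<Longrightarrow> A = B"
  by (cases A; cases B) auto

instantiation m2 :: (comm_ring_1) ring_1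
begin
definition zero_m2 where "0 = M2 0 0 0 0"
definition one_m2 where "1 = M2 1 0 0 1"
definition plus_m2 where "A + B = M2 (e11 A + e11 B) (e12 A + e12 B) (e21 A + e21 B) (e22 A + e22 B)"
definition minus_m2 where "A - B = M2 (e11 A - e11 B) (e12 A - e12 B) (e21 A - e21 B) (e22 A - e22 B)"
definition uminus_m2 where "- A = M2 (- e11 A) (- e12 A) (- e21 A) (- e22 A)"
definition times_m2 where "A * B = M2 (e11 A * e11 B + e12 A * e21 B) (e11 A * e12 B + e12 A * e22 B)
   (e21 A * e11 B + e22 A * e21 B) (e21 A * e12 B + e22 A * e22 B)"
instance
  by standard (auto intro!: m2_eqI simp: zero_m2_def one_m2_def plus_m2_def minus_m2_def uminus_m2_def times_m2_def algebra_simps)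
end

lemma m2_simps [simp]:
  "e11 0 = 0" "e12 0 = 0" "e21 0 = 0" "e22 0 = 0"
  "e11 1 = 1" "e12 1 = 0" "e21 1 = 0" "e22 1 = 1"
  "e11 (A + B) = e11 A + e11 B" "e12 (A + B) = e12 A + e12 B" "e21 (A + B) = e21 A + e21 B" "e22 (A + B) = e22 A + e22 B"
  "e11 (A - B) = e11 A - e11 B" "e12 (A - B) = e12 A - e12 B" "e21 (A - B) = e21 A - e21 B" "e22 (A - B) = e22 A - e22 B"
  "e11 (- A) = - e11 A" "e12 (- A) = - e12 A" "e21 (- A) = - e21 A" "e22 (- A) = - e22 A"
  "e11 (A * B) = e11 A * e11 B + e12 A * e21 B" "e12 (A * B) = e11 A * e12 B + e12 A * e22 B"
  "e21 (A * B) = e21 A * e11 B + e22 A * e21 B" "e22 (A * B) = e21 A * e12 B + e22 A * e22 B"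
  for A B :: "'a::comm_ring_1 m2"
  by (simp_all add: zero_m2_def one_m2_def plus_m2_def minus_m2_def uminus_m2_def times_m2_def)

definition tr :: "'a::comm_ring_1 m2 \<Rightarrow> 'a" where "tr A = e11 A + e22 A"
definition sc :: "'a::comm_ring_1 \<Rightarrow> 'a m2 \<Rightarrow> 'a m2" where "sc c A = M2 (c * e11 A) (c * e12 A) (c * e21 A) (c * e22 A)"

lemma sc_simps [simp]: "e11 (sc c A) = c * e11 A" "e12 (sc c A) = c * e12 A" "e21 (sc c A) = c * e21 A" "e22 (sc c A) = c * e22 A"
  by (simp_all add: sc_def)

lemma tr_mult_comm: "tr (A * B) = tr (B * A)" by (simp add: tr_def algebra_simps)
lemma tr_add [simp]: "tr (A + B) = tr A + tr B" by (simp add: tr_def)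
lemma tr_sc [simp]: "tr (sc c A) = c * tr A" by (simp add: tr_def algebra_simps)
lemma tr_sum: "tr (sum f S) = (\<Sum>x\<in>S. tr (f x))"
  by (induction S rule: infinite_finite_induct) (auto simp: tr_def)
lemma sc_mult_left: "sc c A * B = sc c (A * B)" by (rule m2_eqI) (simp_all add: algebra_simps)
lemma sc_mult_right: "A * sc c B = sc c (A * B)" by (rule m2_eqI) (simp_all add: algebra_simps)
lemma sc_sc: "sc a (sc b A) = sc (a * b) A" by (rule m2_eqI) (simp_all add: algebra_simps)
lemma sc_add: "sc c (A + B) = sc c A + sc c B" by (rule m2_eqI) (simp_all add: algebra_simps)
lemma sc_add2: "sc (a + b) A = sc a A + sc b A" by (rule m2_eqI) (simp_all add: algebra_simps)
lemma sc_zero [simp]: "sc c 0 = 0" by (rule m2_eqI) simp_all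
lemma sc_sum: "sc c (sum f S) = (\<Sum>x\<in>S. sc c (f x))"
  by (induction S rule: infinite_finite_induct) (auto simp: sc_add)
lemma sc_one [simp]: "sc 1 A = A" by (rule m2_eqI) simp_all

fun PP :: "(nat \<Rightarrow> 'b::monoid_mult) \<Rightarrow> nat \<Rightarrow> 'b" where
  "PP F 0 = 1"
| "PP F (Suc n) = F n * PP F n"

lemma PP_cong: "(\<And>i. i < n \<Longrightarrow> F i = G i) \<Longrightarrow> PP F n = PP G n"
  by (induction n) auto


lemma sc1_mult_left: "sc c 1 * M = sc c M" by (rule m2_eqI) simp_all
lemma sc1_mult_right: "M * sc c 1 = sc c M" by (rule m2_eqI) (simp_all add: mult.commute)
lemma sc_zero_left [simp]: "sc 0 M = 0" by (rule m2_eqI) simp_all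
lemma sc_pow1: "(sc c 1)^n = sc (c^n) (1::'a::comm_ring_1 m2)"
proof (induction n)
  case 0 show ?case by (rule m2_eqI) simp_all
next
  case (Suc n) thus ?case by (simp add: sc1_mult_left sc_sc)
qed

lemma binom_sc:
  fixes M :: "'a::comm_ring_1 m2"
  shows "(sc c 1 + M)^n = (\<Sum>k\<le>n. sc (of_nat (n choose k) * c^(n-k)) (M^k))"
proof (induction n)
  case 0
  show ?case by simp
next
  case (Suc n)
  have "(sc c 1 + M)^(Suc n) = (sc c 1 + M) * (\<Sum>k\<le>n. sc (of_nat (n choose k) * c^(n-k)) (M^k))"
    by (simp add: Suc.IH)
  also have "\<dots> = (\<Sum>k\<le>n. sc (of_nat (n choose k) * c^(Suc n - k)) (M^k))
                 + (\<Sum>k\<le>n. sc (of_nat (n choose k) * c^(n-k)) (M^(Suc k)))"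
  proof -
    have A: "sc c 1 * sc (of_nat (n choose k) * c^(n-k)) (M^k) = sc (of_nat (n choose k) * c^(Suc n - k)) (M^k)"
      if "k \<le> n" for k
      using that by (simp add: sc1_mult_left sc_sc Suc_diff_le mult_ac)
    have B: "M * sc a (M^k) = sc a (M^(Suc k))" for a k
      by (simp add: sc_mult_right)
    have "(sc c 1 + M) * (\<Sum>k\<le>n. sc (of_nat (n choose k) * c^(n-k)) (M^k))
       = (\<Sum>k\<le>n. sc c 1 * sc (of_nat (n choose k) * c^(n-k)) (M^k) + M * sc (of_nat (n choose k) * c^(n-k)) (M^k))"
      by (simp add: distrib_right sum_distrib_left sum.distrib)
    also have "\<dots> = (\<Sum>k\<le>n. sc (of_nat (n choose k) * c^(Suc n - k)) (M^k) + sc (of_nat (n choose k) * c^(n-k)) (M^(Suc k)))"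
      by (rule sum.cong) (auto simp: A B)
    finally show ?thesis by (simp add: sum.distrib)
  qed
  also have "(\<Sum>k\<le>n. sc (of_nat (n choose k) * c^(Suc n - k)) (M^k))
      = sc (c^(Suc n)) 1 + (\<Sum>k<n. sc (of_nat (n choose (Suc k)) * c^(n - k)) (M^(Suc k)))"
  proof -
    have "(\<Sum>k\<le>n. sc (of_nat (n choose k) * c^(Suc n - k)) (M^k))
        = sc (c^(Suc n)) 1 + (\<Sum>k<n. sc (of_nat (n choose (Suc k)) * c^(Suc n - Suc k)) (M^(Suc k)))"
      by (subst sum.atMost_shift) simp
    thus ?thesis by simp
  qed
  also have "(\<Sum>k<n. sc (of_nat (n choose (Suc k)) * c^(n - k)) (M^(Suc k)))
     = (\<Sum>k\<le>n. sc (of_nat (n choose (Suc k)) * c^(n - k)) (M^(Suc k)))"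
    by (simp add: lessThan_Suc_atMost[symmetric] sum.lessThan_Suc binomial_eq_0)
  also have "sc (c^(Suc n)) 1 + (\<Sum>k\<le>n. sc (of_nat (n choose (Suc k)) * c^(n - k)) (M^(Suc k)))
      + (\<Sum>k\<le>n. sc (of_nat (n choose k) * c^(n-k)) (M^(Suc k)))
      = sc (c^(Suc n)) 1 + (\<Sum>k\<le>n. sc (of_nat (Suc n choose (Suc k)) * c^(n - k)) (M^(Suc k)))"
    by (simp add: sum.distrib[symmetric] sc_add2[symmetric] distrib_right add.commute)
  also have "\<dots> = (\<Sum>k\<le>Suc n. sc (of_nat (Suc n choose k) * c^(Suc n - k)) (M^k))"
  proof -
    define f where "f k = sc (of_nat (Suc n choose k) * c^(Suc n - k)) (M^k)" for k
    have "(\<Sum>k\<le>Suc n. f k) = f 0 + (\<Sum>k<Suc n. f (Suc k))" by (rule sum.atMost_shift)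
    also have "\<dots> = f 0 + (\<Sum>k\<le>n. f (Suc k))" by (simp only: lessThan_Suc_atMost)
    finally show ?thesis by (simp add: f_def)
  qed
  finally show ?case .
qed

lemma tr_pow_p:
  fixes M :: "'a::comm_ring_1 m2"
  assumes "prime p" "of_nat p = (0::'a)" "odd p" "2 * h = (1::'a)"
  shows "tr (M^p) = (tr M)^p"
proof -
  define c where "c = h * tr M"
  define M0 where "M0 = M - sc c 1"
  have M: "M = sc c 1 + M0" by (simp add: M0_def)
  have trM: "tr M = 2 * c" using assms(4) by (simp add: c_def mult.assoc[symmetric])
  have tr0: "e22 M0 = - e11 M0"
    using trM by (simp add: M0_def tr_def algebra_simps)
  define e where "e = e11 M0 * e11 M0 + e12 M0 * e21 M0"
  have sq: "M0 * M0 = sc e 1"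
    by (rule m2_eqI) (simp_all add: tr0 e_def algebra_simps)
  have odd_pow: "M0^(Suc (2*j)) = sc (e^j) M0" for j
  proof (induction j)
    case 0 show ?case by simp
  next
    case (Suc j)
    have "M0^(Suc (2 * Suc j)) = (M0 * M0) * M0^(Suc (2*j))" by (simp add: mult.assoc)
    also have "\<dots> = sc e 1 * sc (e^j) M0" by (simp only: Suc.IH sq)
    also have "\<dots> = sc (e^(Suc j)) M0" by (simp add: sc1_mult_left sc_sc)
    finally show ?case .
  qed
  obtain j where pj: "p = Suc (2*j)" using assms(3) by (metis oddE Suc_eq_plus1)
  have "tr (M0^p) = tr (sc (e^j) M0)" by (simp only: pj odd_pow)
  hence trM0p: "tr (M0^p) = 0" by (simp add: tr_def tr0)
  have p0: "p > 0" using assms(1) prime_gt_0_nat by blast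
  have mid: "of_nat (p choose k) = (0::'a)" if "0 < k" "k < p" for k
  proof -
    have "p dvd (p choose k)" using dvd_choose_prime[of k p] that assms(1) by auto
    then obtain m where "p choose k = p * m" by (auto elim: dvdE)
    thus ?thesis using assms(2) by simp
  qed
  have "M^p = (\<Sum>k\<le>p. sc (of_nat (p choose k) * c^(p-k)) (M0^k))" by (simp add: M binom_sc)
  also have "{..p} = insert 0 (insert p {1..<p})" using p0 by auto
  also have "(\<Sum>k\<in>insert 0 (insert p {1..<p}). sc (of_nat (p choose k) * c^(p-k)) (M0^k))
      = sc (c^p) 1 + (M0^p + (\<Sum>k\<in>{1..<p}. sc (of_nat (p choose k) * c^(p-k)) (M0^k)))"
    using p0 by (simp add: sum.insert)
  also have "(\<Sum>k\<in>{1..<p}. sc (of_nat (p choose k) * c^(p-k)) (M0^k)) = 0"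
    by (rule sum.neutral) (auto simp: mid)
  finally have "M^p = sc (c^p) 1 + M0^p" by simp
  hence "tr (M^p) = tr (sc (c^p) 1) + tr (M0^p)" by simp
  also have "\<dots> = 2 * c^p" using trM0p by (simp add: tr_def)
  also have "(2::'a)^p = 2" using frob[OF assms(1,2), of 1 1] by simp
  hence "2 * c^p = (2*c)^p" by (simp add: power_mult_distrib)
  finally show ?thesis by (simp add: trM)
qed

definition mmap :: "('a \<Rightarrow> 'b) \<Rightarrow> 'a m2 \<Rightarrow> 'b m2" where
  "mmap f A = M2 (f (e11 A)) (f (e12 A)) (f (e21 A)) (f (e22 A))"

lemma mmap_simps [simp]: "e11 (mmap f A) = f (e11 A)" "e12 (mmap f A) = f (e12 A)"
  "e21 (mmap f A) = f (e21 A)" "e22 (mmap f A) = f (e22 A)"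
  by (simp_all add: mmap_def)

lemma mmap_mult:
  fixes f :: "'a::comm_ring_1 \<Rightarrow> 'b::comm_ring_1"
  assumes "\<And>a b. f (a + b) = f a + f b" "\<And>a b. f (a * b) = f a * f b"
  shows "mmap f (A * B) = mmap f A * mmap f B"
  by (rule m2_eqI) (simp_all add: assms)

lemma mmap_PP:
  fixes f :: "'a::comm_ring_1 \<Rightarrow> 'b::comm_ring_1"
  assumes "\<And>a b. f (a + b) = f a + f b" "\<And>a b. f (a * b) = f a * f b" "f 0 = 0" "f 1 = 1"
  shows "mmap f (PP F n) = PP (\<lambda>i. mmap f (F i)) n"
proof (induction n)
  case 0 show ?case by simp (rule m2_eqI, simp_all add: assms)
next
  case (Suc n) thus ?case by (simp add: mmap_mult[OF assms(1,2)])
qed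

lemma tr_mmap:
  assumes "\<And>a b. f (a + b) = f a + f b"
  shows "tr (mmap f A) = f (tr A)"
  by (simp add: tr_def assms)

lemma PP_shift: "PP (\<lambda>i. F (Suc i)) n * F 0 = PP F (Suc n)"
  by (induction n) (simp_all add: mult.assoc)

lemma tr_PP_rot:
  fixes F :: "nat \<Rightarrow> 'a::comm_ring_1 m2"
  assumes "F n = F 0"
  shows "tr (PP (\<lambda>i. F (Suc i)) n) = tr (PP F n)"
proof (cases n)
  case 0 thus ?thesis by simp
next
  case (Suc m)
  have "tr (PP (\<lambda>i. F (Suc i)) n) = tr (F 0 * PP (\<lambda>i. F (Suc i)) m)"
    using assms Suc by simp
  also have "\<dots> = tr (PP (\<lambda>i. F (Suc i)) m * F 0)" by (rule tr_mult_comm)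
  also have "\<dots> = tr (PP F n)" by (simp add: PP_shift Suc)
  finally show ?thesis .
qed

lemma PP_regroup_aux:
  fixes X Y :: "'a::comm_ring_1 \<Rightarrow> 'a m2"
  shows "PP (\<lambda>i. Y (of_nat i) * X (of_nat i - 1)) (Suc n) = Y (of_nat n) * PP (\<lambda>i. X (of_nat i) * Y (of_nat i)) n * X (-1)"
proof (induction n)
  case 0 show ?case by simp
next
  case (Suc n)
  have "PP (\<lambda>i. Y (of_nat i) * X (of_nat i - 1)) (Suc (Suc n))
      = Y (of_nat (Suc n)) * X (of_nat (Suc n) - 1) * PP (\<lambda>i. Y (of_nat i) * X (of_nat i - 1)) (Suc n)"
    by (simp only: PP.simps)
  also have "\<dots> = Y (of_nat (Suc n)) * X (of_nat n) * (Y (of_nat n) * PP (\<lambda>i. X (of_nat i) * Y (of_nat i)) n * X (-1))"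
    by (simp only: Suc.IH) simp
  also have "\<dots> = Y (of_nat (Suc n)) * PP (\<lambda>i. X (of_nat i) * Y (of_nat i)) (Suc n) * X (-1)"
    by (simp add: mult.assoc)
  finally show ?case .
qed

lemma tr_PP_regroup:
  fixes X Y :: "'a::comm_ring_1 \<Rightarrow> 'a m2"
  assumes "of_nat p = (0::'a)"
  shows "tr (PP (\<lambda>i. X (of_nat i) * Y (of_nat i)) p) = tr (PP (\<lambda>i. Y (of_nat i) * X (of_nat i - 1)) p)"
proof (cases p)
  case 0 thus ?thesis by simp
next
  case (Suc m)
  have m: "(of_nat m :: 'a) = -1" using assms Suc by (simp add: eq_neg_iff_add_eq_0 add.commute)
  have "PP (\<lambda>i. Y (of_nat i) * X (of_nat i - 1)) p = Y (of_nat m) * PP (\<lambda>i. X (of_nat i) * Y (of_nat i)) m * X (-1)"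
    unfolding Suc by (rule PP_regroup_aux)
  hence "tr (PP (\<lambda>i. Y (of_nat i) * X (of_nat i - 1)) p) = tr (Y (of_nat m) * PP (\<lambda>i. X (of_nat i) * Y (of_nat i)) m * X (-1))"
    by simp
  also have "\<dots> = tr (X (-1) * (Y (of_nat m) * PP (\<lambda>i. X (of_nat i) * Y (of_nat i)) m))"
    by (rule tr_mult_comm)
  also have "\<dots> = tr (PP (\<lambda>i. X (of_nat i) * Y (of_nat i)) p)"
    by (simp add: Suc m mult.assoc)
  finally show ?thesis by simp
qed

lemma PP_conj:
  assumes "W * Wi = 1" "Wi * W = 1"
  shows "PP (\<lambda>i. W * F i * Wi) n = W * PP F n * Wi"
proof (induction n)
  case 0 show ?case using assms by simp
next
  case (Suc n)
  have "PP (\<lambda>i. W * F i * Wi) (Suc n) = W * F n * Wi * PP (\<lambda>i. W * F i * Wi) n"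
    by (simp only: PP.simps)
  also have "\<dots> = W * F n * Wi * (W * PP F n * Wi)" by (simp only: Suc.IH)
  also have "\<dots> = W * F n * (Wi * W) * PP F n * Wi" by (simp add: mult.assoc)
  finally show ?case using assms by (simp add: mult.assoc)
qed


definition DS :: "nat \<Rightarrow> nat list set" where
  "DS n = {d. length d = n \<and> set d \<subseteq> {0,1,2}}"

definition wt :: "nat list \<Rightarrow> 'a::comm_ring_1" where
  "wt d = (\<Prod>i<length d. (of_nat i)^(d!i))"

lemma finite_DS: "finite (DS n)"
proof -
  have "DS n = {xs. set xs \<subseteq> {0,1,2} \<and> length xs = n}" by (auto simp: DS_def)
  thus ?thesis by (simp add: finite_lists_length_eq)
qed

lemma DS_Suc: "DS (Suc m) = (\<lambda>(d,c). d @ [c]) ` (DS m \<times> {0,1,2})"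
proof (rule set_eqI, rule iffI)
  fix e assume "e \<in> DS (Suc m)"
  hence e: "length e = Suc m" "set e \<subseteq> {0,1,2}" by (auto simp: DS_def)
  then obtain d c where "e = d @ [c]" by (metis append_butlast_last_id length_0_conv nat.distinct(1))
  with e show "e \<in> (\<lambda>(d,c). d @ [c]) ` (DS m \<times> {0,1,2})"
    by (auto simp: DS_def image_iff)
qed (auto simp: DS_def)

lemma inj_snoc: "inj_on (\<lambda>(d,c). d @ [c]) A"
  by (auto simp: inj_on_def)

lemma expand_PP:
  fixes Hc :: "nat \<Rightarrow> 'r::comm_ring_1 m2" and z :: "nat \<Rightarrow> 'r"
  shows "PP (\<lambda>n. \<Sum>c\<in>{0,1,2::nat}. sc ((z n)^c) (Hc c)) m
       = (\<Sum>d\<in>DS m. sc (\<Prod>i<m. (z i)^(d!i)) (prod_list (rev (map Hc d))))"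
proof (induction m)
  case 0
  have "DS 0 = {[]}" by (auto simp: DS_def)
  thus ?case by simp
next
  case (Suc m)
  have "(\<Sum>e\<in>DS (Suc m). sc (\<Prod>i<Suc m. (z i)^(e!i)) (prod_list (rev (map Hc e))))
      = (\<Sum>x\<in>DS m \<times> {0,1,2}. (\<lambda>e. sc (\<Prod>i<Suc m. (z i)^(e!i)) (prod_list (rev (map Hc e)))) ((\<lambda>(d,c). d @ [c]) x))"
    unfolding DS_Suc by (simp add: sum.reindex[OF inj_snoc])
  also have "\<dots> = (\<Sum>d\<in>DS m. \<Sum>c\<in>{0,1,2}. sc (\<Prod>i<Suc m. (z i)^((d@[c])!i)) (prod_list (rev (map Hc (d@[c])))))"
    by (simp only: sum.cartesian_product split_def)
  also have "\<dots> = (\<Sum>d\<in>DS m. \<Sum>c\<in>{0,1,2}. sc ((z m)^c * (\<Prod>i<m. (z i)^(d!i))) (Hc c * prod_list (rev (map Hc d))))"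
  proof (rule sum.cong[OF refl], rule sum.cong[OF refl])
    fix d c assume d: "d \<in> DS m"
    hence ld: "length d = m" by (simp add: DS_def)
    have "(\<Prod>i<Suc m. (z i)^((d@[c])!i)) = (z m)^c * (\<Prod>i<m. (z i)^((d@[c])!i))"
      using ld by (simp add: mult.commute nth_append)
    also have "(\<Prod>i<m. (z i)^((d@[c])!i)) = (\<Prod>i<m. (z i)^(d!i))"
      using ld by (intro prod.cong) (auto simp: nth_append)
    finally show "sc (\<Prod>i<Suc m. (z i)^((d@[c])!i)) (prod_list (rev (map Hc (d@[c]))))
        = sc ((z m)^c * (\<Prod>i<m. (z i)^(d!i))) (Hc c * prod_list (rev (map Hc d)))"
      by simp
  qed
  also have "\<dots> = (\<Sum>d\<in>DS m. \<Sum>c\<in>{0,1,2}. sc ((z m)^c) (Hc c) * sc (\<Prod>i<m. (z i)^(d!i)) (prod_list (rev (map Hc d))))"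
    by (simp only: sc_mult_left sc_mult_right sc_sc mult.commute)
  also have "\<dots> = (\<Sum>d\<in>DS m. (\<Sum>c\<in>{0,1,2}. sc ((z m)^c) (Hc c)) * sc (\<Prod>i<m. (z i)^(d!i)) (prod_list (rev (map Hc d))))"
    by (simp only: sum_distrib_right)
  also have "\<dots> = (\<Sum>c\<in>{0,1,2}. sc ((z m)^c) (Hc c)) * (\<Sum>d\<in>DS m. sc (\<Prod>i<m. (z i)^(d!i)) (prod_list (rev (map Hc d))))"
    by (simp only: sum_distrib_left)
  also have "\<dots> = PP (\<lambda>n. \<Sum>c\<in>{0,1,2::nat}. sc ((z n)^c) (Hc c)) (Suc m)"
    by (simp only: PP.simps Suc.IH)
  finally show ?case ..
qed

lemma sum_list_rotate: "sum_list (rotate r d) = sum_list (d :: nat list)"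
proof (induction r)
  case 0 show ?case by simp
next
  case (Suc r)
  have "sum_list (rotate1 xs) = sum_list xs" for xs :: "nat list" by (cases xs) simp_all
  thus ?case using Suc by simp
qed

lemma DS_rotate: "d \<in> DS n \<Longrightarrow> rotate r d \<in> DS n"
  by (simp add: DS_def)

lemma reindex_rot_sum:
  fixes r p :: nat
  assumes "r < p"
  shows "(\<Sum>i<p. f ((r + i) mod p) i) = (\<Sum>j<p. f j ((j + (p - r)) mod p))"
proof (rule sum.reindex_bij_witness[of _ "\<lambda>j. (j + (p - r)) mod p" "\<lambda>i. (r + i) mod p"])
  fix j assume j: "j \<in> {..<p}"
  have "(r + (j + (p - r)) mod p) mod p = (r + (j + (p - r))) mod p" by (rule mod_add_right_eq)
  also have "r + (j + (p - r)) = j + p" using assms by simp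
  finally show "(r + (j + (p - r)) mod p) mod p = j" using j by simp
  show "(j + (p - r)) mod p \<in> {..<p}" using assms by simp
next
  fix i assume i: "i \<in> {..<p}"
  have "((r + i) mod p + (p - r)) mod p = (r + i + (p - r)) mod p" by (rule mod_add_left_eq)
  also have "r + i + (p - r) = i + p" using assms by simp
  finally show "((r + i) mod p + (p - r)) mod p = i" using i by simp
  show "(r + i) mod p \<in> {..<p}" using assms by simp
  show "f ((r + i) mod p) ((((r + i) mod p) + (p - r)) mod p) = f ((r + i) mod p) i"
    using \<open>((r + i) mod p + (p - r)) mod p = i\<close> by simp
qed

lemma reindex_rot_prod:
  fixes r p :: nat
  assumes "r < p"
  shows "(\<Prod>i<p. f ((r + i) mod p) i) = (\<Prod>j<p. f j ((j + (p - r)) mod p))"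
proof (rule prod.reindex_bij_witness[of _ "\<lambda>j. (j + (p - r)) mod p" "\<lambda>i. (r + i) mod p"])
  fix j assume j: "j \<in> {..<p}"
  have "(r + (j + (p - r)) mod p) mod p = (r + (j + (p - r))) mod p" by (rule mod_add_right_eq)
  also have "r + (j + (p - r)) = j + p" using assms by simp
  finally show "(r + (j + (p - r)) mod p) mod p = j" using j by simp
  show "(j + (p - r)) mod p \<in> {..<p}" using assms by simp
next
  fix i assume i: "i \<in> {..<p}"
  have "((r + i) mod p + (p - r)) mod p = (r + i + (p - r)) mod p" by (rule mod_add_left_eq)
  also have "r + i + (p - r) = i + p" using assms by simp
  finally show "((r + i) mod p + (p - r)) mod p = i" using i by simp
  show "(r + i) mod p \<in> {..<p}" using assms by simp
  show "f ((r + i) mod p) ((((r + i) mod p) + (p - r)) mod p) = f ((r + i) mod p) i"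
    using \<open>((r + i) mod p + (p - r)) mod p = i\<close> by simp
qed

lemma of_nat_rot:
  assumes "of_nat p = (0::'a::comm_ring_1)" "r < p"
  shows "(of_nat ((j + (p - r)) mod p) :: 'a) = of_nat j - of_nat r"
proof -
  have "(of_nat ((j + (p - r)) mod p) :: 'a) = of_nat (j + (p - r))" by (rule of_nat_mod_p[OF assms(1)])
  also have "\<dots> = of_nat j + of_nat p - of_nat r" using assms(2) by (simp add: of_nat_diff)
  finally show ?thesis using assms(1) by simp
qed


lemma orbit_lemma:
  fixes c :: "nat list \<Rightarrow> 'a::field"
  assumes pr: "prime p" and p0: "of_nat p = (0::'a)" and odd: "odd p"
    and rot: "\<And>d. c (rotate1 d) = c d"
    and big: "\<And>d. d \<in> DS p \<Longrightarrow> p < 2 * sum_list d \<Longrightarrow> c d = 0"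
  shows "(\<Sum>d\<in>DS p. wt d * c d) = c (replicate p 0)"
proof -
  have p3: "p \<ge> 3"
  proof -
    have "p \<ge> 2" using pr prime_ge_2_nat by blast
    moreover have "p \<noteq> 2" using odd by auto
    ultimately show ?thesis by linarith
  qed
  define E where "E = {d\<in>DS p. 0 < sum_list d \<and> 2 * sum_list d \<le> p}"
  define B where "B = {d\<in>DS p. p < 2 * sum_list d}"
  have Z: "{d\<in>DS p. sum_list d = 0} = {replicate p 0}"
  proof (rule set_eqI, rule iffI)
    fix d assume "d \<in> {d\<in>DS p. sum_list d = 0}"
    hence "length d = p" "\<forall>y\<in>set d. y = 0" by (auto simp: DS_def)
    hence "d = replicate p 0" using replicate_length_same[of d 0] by simp
    thus "d \<in> {replicate p 0}" by simp
  qed (auto simp: DS_def)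
  have split: "DS p = {replicate p 0} \<union> (E \<union> B)"
    using Z[symmetric] by (auto simp: E_def B_def) 
  have fin: "finite E" "finite B" using finite_DS by (auto simp: E_def B_def)
  have disj: "{replicate p 0} \<inter> (E \<union> B) = {}" "E \<inter> B = {}"
    by (auto simp: E_def B_def sum_list_replicate)
  have sumB: "(\<Sum>d\<in>B. wt d * c d) = 0"
    by (rule sum.neutral) (auto simp: B_def big)
  have wt0: "wt (replicate p 0) = (1::'a)" by (simp add: wt_def)
  have lenE: "length d = p" if "d \<in> E" for d using that by (simp add: E_def DS_def)
  have sl: "sum_list d = (\<Sum>i<p. d!i)" if "length d = p" for d :: "nat list"
    using that by (simp add: sum_list_sum_nth atLeast0LessThan)
  have nz: "of_nat (sum_list d) \<noteq> (0::'a)" if "d \<in> E" for d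
  proof
    assume "of_nat (sum_list d) = (0::'a)"
    hence "p dvd sum_list d" using of_nat_zero_iff[OF pr p0] by blast
    moreover have "0 < sum_list d" "sum_list d < p" using that p3 by (auto simp: E_def)
    ultimately show False by (simp add: nat_dvd_not_less)
  qed
  have rotE: "rotate r d \<in> E" if "d \<in> E" for r d
    using that by (simp add: E_def DS_def sum_list_rotate)
  define \<theta> where "\<theta> d = (of_nat (\<Sum>i<p. d!i * i) :: 'a) / of_nat (sum_list d)" for d
  have theta_rot: "\<theta> (rotate r d) = \<theta> d - of_nat r" if d: "d \<in> E" and r: "r < p" for d r
  proof -
    have ld: "length d = p" using lenE[OF d] .
    have "(\<Sum>i<p. rotate r d ! i * i) = (\<Sum>i<p. d ! ((r + i) mod p) * i)"
      using ld by (intro sum.cong) (auto simp: nth_rotate)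
    also have "\<dots> = (\<Sum>j<p. d ! j * ((j + (p - r)) mod p))"
      by (rule reindex_rot_sum[OF r, where f = "\<lambda>a b. d ! a * b"])
    finally have "(of_nat (\<Sum>i<p. rotate r d ! i * i) :: 'a) = (\<Sum>j<p. of_nat (d ! j) * of_nat ((j + (p - r)) mod p))"
      by simp
    also have "\<dots> = (\<Sum>j<p. of_nat (d ! j) * (of_nat j - of_nat r))"
      using of_nat_rot[OF p0 r] by simp
    also have "\<dots> = of_nat (\<Sum>j<p. d!j * j) - of_nat r * of_nat (sum_list d)"
      by (simp add: sl[OF ld] algebra_simps sum_subtractf sum_distrib_left)
    finally show ?thesis
      using nz[OF d] by (simp add: \<theta>_def sum_list_rotate field_simps)
  qed
  have theta_val: "\<exists>r<p. \<theta> d = of_nat r" if d: "d \<in> E" for d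
  proof -
    define s where "s = sum_list d"
    have "\<not> p dvd s" using nz[OF d] of_nat_zero_iff[OF pr p0] by (simp add: s_def)
    hence "coprime p s" using pr prime_imp_coprime by blast
    hence "coprime s p" by (simp add: coprime_commute)
    then obtain x where x: "[s * x = Suc 0] (mod p)" using cong_solve_coprime_nat by blast
    have sx: "(of_nat s :: 'a) * of_nat x = 1"
    proof -
      have "(of_nat (s * x) :: 'a) = of_nat ((s * x) mod p)" by (simp add: of_nat_mod_p[OF p0])
      also have "(s * x) mod p = Suc 0 mod p" using x by (simp only: cong_def)
      also have "(of_nat (Suc 0 mod p) :: 'a) = 1" by (simp only: of_nat_mod_p[OF p0]) simp
      finally show ?thesis by simp
    qed
    define N where "N = (\<Sum>i<p. d!i * i)"
    have "\<theta> d = of_nat N * of_nat x"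
      using sx nz[OF d] by (simp add: \<theta>_def N_def s_def field_simps)
    also have "\<dots> = of_nat ((N * x) mod p)" by (simp add: of_nat_mod_p[OF p0])
    finally show ?thesis using pr prime_gt_0_nat by (intro exI[of _ "(N * x) mod p"]) auto
  qed
  define hp where "hp d = (\<Prod>j<p. [:of_nat j, -1:] ^ (d!j) :: 'a poly)" for d
  have wt_rot: "wt (rotate r d) = poly (hp d) (of_nat r)" if ld: "length d = p" and r: "r < p" for d r
  proof -
    have "wt (rotate r d) = (\<Prod>i<p. (of_nat i :: 'a) ^ (d ! ((r + i) mod p)))"
      using ld by (simp add: wt_def) (intro prod.cong, auto simp: nth_rotate)
    also have "\<dots> = (\<Prod>j<p. (of_nat ((j + (p - r)) mod p) :: 'a) ^ (d ! j))"
      by (rule reindex_rot_prod[OF r, where f = "\<lambda>a b. (of_nat b :: 'a) ^ (d ! a)"])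
    also have "\<dots> = (\<Prod>j<p. (of_nat j - of_nat r :: 'a) ^ (d ! j))"
      using of_nat_rot[OF p0 r] by simp
    also have "\<dots> = poly (hp d) (of_nat r)"
      by (simp add: hp_def poly_prod)
    finally show ?thesis .
  qed
  have deg_hp: "degree (hp d) \<le> sum_list d" if ld: "length d = p" for d
  proof -
    have "degree (hp d) \<le> sum (degree \<circ> (\<lambda>j. [:of_nat j, -1:] ^ (d!j) :: 'a poly)) {..<p}"
      unfolding hp_def by (rule degree_prod_sum_le) simp
    hence "degree (hp d) \<le> (\<Sum>j<p. degree ([:of_nat j, -1:] ^ (d!j) :: 'a poly))"
      by (simp only: comp_def)
    also have "\<dots> \<le> (\<Sum>j<p. d!j)"
    proof (rule sum_mono)
      fix j
      have "degree ([:of_nat j, -1:] ^ (d!j) :: 'a poly) \<le> degree ([:of_nat j, -1:] :: 'a poly) * (d!j)"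
        by (rule degree_power_le)
      also have "\<dots> \<le> d!j" by simp
      finally show "degree ([:of_nat j, -1:] ^ (d!j) :: 'a poly) \<le> d!j" .
    qed
    finally show ?thesis using sl[OF ld] by simp
  qed
  have c_rot: "c (rotate r d) = c d" for r d
    by (induction r) (simp_all add: rot)
  have orbit_sum: "(\<Sum>r<p. wt (rotate r d)) = (0::'a)" if d: "d \<in> E" for d
  proof -
    have "(\<Sum>r<p. wt (rotate r d)) = (\<Sum>r<p. poly (hp d) (of_nat r))"
      using lenE[OF d] by (intro sum.cong) (auto simp: wt_rot)
    also have "\<dots> = 0"
    proof (rule psum_poly_zero[OF pr p0])
      have "degree (hp d) \<le> sum_list d" using deg_hp lenE[OF d] by blast
      moreover have "2 * sum_list d \<le> p" using d by (simp add: E_def)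
      ultimately show "degree (hp d) < p - 1" using p3 by linarith
    qed
    finally show ?thesis .
  qed
  define E0 where "E0 = {d\<in>E. \<theta> d = 0}"
  have bij: "bij_betw (\<lambda>(r,d). rotate r d) ({..<p} \<times> E0) E"
  proof (rule bij_betw_imageI)
    show "inj_on (\<lambda>(r,d). rotate r d) ({..<p} \<times> E0)"
    proof (rule inj_onI, clarify)
      fix r d r' d' assume r: "r < p" and d: "d \<in> E0" and r': "r' < p" and d': "d' \<in> E0"
        and eq: "rotate r d = rotate r' d'"
      have "\<theta> (rotate r d) = - of_nat r" using theta_rot[of d r] d r by (simp add: E0_def)
      moreover have "\<theta> (rotate r' d') = - of_nat r'" using theta_rot[of d' r'] d' r' by (simp add: E0_def)
      ultimately have "(of_nat r :: 'a) = of_nat r'" using eq by simp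
      hence rr: "r = r'" using of_nat_inj_p[OF pr p0 r r'] by blast
      have "d = rotate (p - r) (rotate r d)"
        using d r lenE[of d] by (simp add: E0_def rotate_rotate)
      also have "\<dots> = rotate (p - r) (rotate r d')" using eq rr by simp
      also have "\<dots> = d'"
        using d' r lenE[of d'] by (simp add: E0_def rotate_rotate)
      finally show "r = r' \<and> d = d'" using rr by simp
    qed
    show "(\<lambda>(r,d). rotate r d) ` ({..<p} \<times> E0) = E"
    proof (rule set_eqI, rule iffI)
      fix e assume "e \<in> (\<lambda>(r,d). rotate r d) ` ({..<p} \<times> E0)"
      then obtain r d where "d \<in> E0" "e = rotate r d" by auto
      thus "e \<in> E" using rotE by (auto simp: E0_def)
    next
      fix e assume e: "e \<in> E"
      obtain r0 where r0: "r0 < p" "\<theta> e = of_nat r0" using theta_val[OF e] by blast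
      define d where "d = rotate r0 e"
      have dE0: "d \<in> E0" using theta_rot[OF e r0(1)] r0 rotE[OF e] by (simp add: E0_def d_def)
      have "rotate ((p - r0) mod p) d = e"
      proof -
        have "rotate ((p - r0) mod p) d = rotate ((p - r0) mod p + r0) e" by (simp add: d_def rotate_rotate)
        also have "\<dots> = e"
        proof (rule rotate_id)
          have "((p - r0) mod p + r0) mod p = ((p - r0) + r0) mod p" by (rule mod_add_left_eq)
          also have "(p - r0) + r0 = p" using r0 by simp
          finally show "((p - r0) mod p + r0) mod length e = 0" using lenE[OF e] by simp
        qed
        finally show ?thesis .
      qed
      moreover have "(p - r0) mod p < p" using p3 by simp
      ultimately show "e \<in> (\<lambda>(r,d). rotate r d) ` ({..<p} \<times> E0)"
        using dE0 by (intro image_eqI[of _ _ "((p - r0) mod p, d)"]) auto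
    qed
  qed
  have sumE: "(\<Sum>d\<in>E. wt d * c d) = 0"
  proof -
    have "(\<Sum>d\<in>E. wt d * c d) = (\<Sum>x\<in>{..<p} \<times> E0. (\<lambda>e. wt e * c e) ((\<lambda>(r,d). rotate r d) x))"
      by (rule sum.reindex_bij_betw[OF bij, symmetric])
    also have "\<dots> = (\<Sum>(r,d)\<in>{..<p} \<times> E0. wt (rotate r d) * c d)"
      by (intro sum.cong) (auto simp: c_rot)
    also have "\<dots> = (\<Sum>r<p. \<Sum>d\<in>E0. wt (rotate r d) * c d)"
      by (rule sum.cartesian_product[symmetric])
    also have "\<dots> = (\<Sum>d\<in>E0. c d * (\<Sum>r<p. wt (rotate r d)))"
      by (subst sum.swap) (simp add: sum_distrib_left mult.commute)
    also have "\<dots> = 0" by (rule sum.neutral) (auto simp: E0_def orbit_sum)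
    finally show ?thesis .
  qed
  have "(\<Sum>d\<in>DS p. wt d * c d) = (\<Sum>d\<in>{replicate p 0}. wt d * c d) + ((\<Sum>d\<in>E. wt d * c d) + (\<Sum>d\<in>B. wt d * c d))"
    unfolding split using fin disj by (simp add: sum.union_disjoint)
  thus ?thesis using sumE sumB wt0 by simp
qed


definition Em :: "'a::comm_ring_1 \<Rightarrow> 'a \<Rightarrow> 'a m2" where "Em a w = M2 a 1 w 0"

definition blk :: "'a::comm_ring_1 \<Rightarrow> 'a \<Rightarrow> 'a \<Rightarrow> 'a \<Rightarrow> 'a \<Rightarrow> 'a \<Rightarrow> 'a \<Rightarrow> 'a m2" where
  "blk a1 a2 a3 b1 b2 b3 z = Em a1 (z + b1) * Em a2 (z + b2) * Em a3 (z + b3)"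

definition Jt :: "nat \<Rightarrow> 'a::comm_ring_1 \<Rightarrow> 'a \<Rightarrow> 'a \<Rightarrow> 'a \<Rightarrow> 'a \<Rightarrow> 'a \<Rightarrow> 'a \<Rightarrow> 'a" where
  "Jt p a1 a2 a3 b1 b2 b3 x = tr (PP (\<lambda>n. blk a1 a2 a3 b1 b2 b3 (of_nat n + x)) p)"

definition dle :: "'a::zero poly \<Rightarrow> int \<Rightarrow> bool" where
  "dle q m \<longleftrightarrow> (\<forall>k. m < 2 * int k \<longrightarrow> coeff q k = 0)"

lemma dle_0 [simp]: "dle 0 m" by (simp add: dle_def)
lemma dle_mono: "dle q m \<Longrightarrow> m \<le> n \<Longrightarrow> dle q n" by (auto simp: dle_def)
lemma dle_add: "dle q m \<Longrightarrow> dle r m \<Longrightarrow> dle (q + r) m" by (auto simp: dle_def)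
lemma dle_const: "0 \<le> m \<Longrightarrow> dle [:a:] m" by (auto simp: dle_def coeff_pCons split: nat.splits)
lemma dle_1: "0 \<le> m \<Longrightarrow> dle 1 m" using dle_const[of m 1] by (simp add: one_pCons)
lemma dle_lin: "2 \<le> m \<Longrightarrow> dle ([:b:] + [:0,1:]) m"
  by (auto simp: dle_def coeff_pCons split: nat.splits)

lemma dle_mult:
  fixes q r :: "'a::comm_semiring_0 poly"
  assumes "dle q m" "dle r n"
  shows "dle (q * r) (m + n)"
  unfolding dle_def
proof (intro allI impI)
  fix k assume k: "m + n < 2 * int k"
  have "coeff (q * r) k = (\<Sum>i\<le>k. coeff q i * coeff r (k - i))" by (rule coeff_mult)
  also have "\<dots> = 0"
  proof (rule sum.neutral, rule ballI)
    fix i assume "i \<in> {..k}"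
    hence ik: "i \<le> k" by simp
    show "coeff q i * coeff r (k - i) = 0"
    proof (cases "m < 2 * int i")
      case True thus ?thesis using assms(1) by (simp add: dle_def)
    next
      case False
      hence "n < 2 * int (k - i)" using k ik by (simp add: of_nat_diff)
      thus ?thesis using assms(2) by (simp add: dle_def)
    qed
  qed
  finally show "coeff (q * r) k = 0" .
qed

definition wdeg :: "int \<Rightarrow> 'a::comm_ring_1 poly m2 \<Rightarrow> bool" where
  "wdeg n A \<longleftrightarrow> dle (e11 A) n \<and> dle (e12 A) (n - 1) \<and> dle (e21 A) (n + 1) \<and> dle (e22 A) n"

lemma wdeg_mult:
  assumes "wdeg n A" "wdeg m B"
  shows "wdeg (n + m) (A * B)"
proof -
  have D: "dle x a \<Longrightarrow> dle y b \<Longrightarrow> a + b \<le> c \<Longrightarrow> dle (x * y) c" for x y :: "'a poly" and a b c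
    by (rule dle_mono[OF dle_mult]) 
  show ?thesis using assms unfolding wdeg_def
    by (auto intro!: dle_add D)
qed

lemma wdeg_add: "wdeg n A \<Longrightarrow> wdeg n B \<Longrightarrow> wdeg n (A + B)"
  by (simp add: wdeg_def dle_add)

lemma wdeg_mono: "wdeg n A \<Longrightarrow> n \<le> m \<Longrightarrow> wdeg m A"
  by (auto simp: wdeg_def intro: dle_mono)

lemma wdeg_sc: "wdeg n A \<Longrightarrow> wdeg n (sc [:c:] A)"
proof -
  assume a: "wdeg n A"
  have "dle q k \<Longrightarrow> dle ([:c:] * q) k" for q k
    using dle_mult[OF dle_const[of 0 c], of q k] by simp
  thus ?thesis using a by (simp add: wdeg_def)
qed

lemma wdeg_one: "wdeg 0 (1 :: 'a::comm_ring_1 poly m2)"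
  by (simp add: wdeg_def dle_1)

lemma wdeg_PP: "(\<And>i. i < n \<Longrightarrow> wdeg k (F i)) \<Longrightarrow> wdeg (k * int n) (PP F n)"
proof (induction n)
  case 0 show ?case by (simp add: wdeg_one)
next
  case (Suc n)
  have "wdeg (k + k * int n) (F n * PP F n)"
    by (rule wdeg_mult) (use Suc in auto)
  thus ?case by (simp add: algebra_simps)
qed

lemma wdeg_tr: "wdeg n A \<Longrightarrow> dle (tr A) n"
  by (simp add: wdeg_def tr_def dle_add)

definition word :: "(nat \<Rightarrow> 'b::monoid_mult) \<Rightarrow> nat list \<Rightarrow> 'b" where
  "word H d = prod_list (rev (map H d))"

lemma word_Cons: "word H (x # ys) = word H ys * H x" by (simp add: word_def)
lemma word_snoc: "word H (ys @ [x]) = H x * word H ys" by (simp add: word_def)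

lemma tr_word_rotate1: "tr (word H (rotate1 d)) = tr (word H d)"
  by (cases d) (simp_all add: word_Cons word_snoc tr_mult_comm)

lemma wdeg_word:
  assumes "\<And>c. c \<in> {0,1,2} \<Longrightarrow> wdeg (3 - 2 * int c) (H c)"
  shows "set d \<subseteq> {0,1,2} \<Longrightarrow> wdeg (3 * int (length d) - 2 * int (sum_list d)) (word H d)"
proof (induction d)
  case Nil show ?case by (simp add: word_def wdeg_one)
next
  case (Cons x ys)
  have "wdeg ((3 * int (length ys) - 2 * int (sum_list ys)) + (3 - 2 * int x)) (word H ys * H x)"
    by (rule wdeg_mult) (use Cons assms in auto)
  thus ?case by (simp add: word_Cons algebra_simps)
qed


abbreviation cX :: "'a::comm_ring_1 poly" where "cX \<equiv> [:0,1:]"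

definition Gp :: "'a::comm_ring_1 \<Rightarrow> 'a \<Rightarrow> 'a poly m2" where "Gp a b = Em [:a:] ([:b:] + cX)"
definition Nm :: "'a::comm_ring_1 poly m2" where "Nm = M2 0 0 1 0"

definition Hc :: "'a::comm_ring_1 \<Rightarrow> 'a \<Rightarrow> 'a \<Rightarrow> 'a \<Rightarrow> 'a \<Rightarrow> 'a \<Rightarrow> nat \<Rightarrow> 'a poly m2" where
  "Hc a1 a2 a3 b1 b2 b3 c = (if c = 0 then Gp a1 b1 * Gp a2 b2 * Gp a3 b3
     else if c = 1 then Nm * Gp a2 b2 * Gp a3 b3 + Gp a1 b1 * Nm * Gp a3 b3 + Gp a1 b1 * Gp a2 b2 * Nm
     else Nm)"

lemma Em_shift: "Em [:a:] ([:z:] + cX + [:b:]) = Gp a b + sc [:z:] Nm"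
  by (rule m2_eqI) (simp_all add: Em_def Gp_def Nm_def algebra_simps)

lemma Nm_Nm: "Nm * Nm = (0::'a::comm_ring_1 poly m2)"
  by (rule m2_eqI) (simp_all add: Nm_def)

lemma Nm_Gp_Nm: "Nm * Gp a b * Nm = Nm"
  by (rule m2_eqI) (simp_all add: Nm_def Gp_def Em_def)

lemma blk_expand:
  "blk [:a1:] [:a2:] [:a3:] [:b1:] [:b2:] [:b3:] ([:z:] + cX)
    = (\<Sum>c\<in>{0,1,2::nat}. sc ([:z:]^c) (Hc a1 a2 a3 b1 b2 b3 c))"
  by (rule m2_eqI) (simp_all add: blk_def Em_def Hc_def Gp_def Nm_def algebra_simps power2_eq_square)


lemma cX_pow: "(cX :: 'a::comm_ring_1 poly)^n = monom 1 n"
proof (induction n)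
  case 0 show ?case by (simp add: monom_0)
next
  case (Suc n)
  have "(cX :: 'a poly)^(Suc n) = cX * monom 1 n" by (simp add: Suc.IH)
  also have "\<dots> = monom 1 (Suc n)" by (simp add: monom_Suc)
  finally show ?case .
qed

lemma prod_const_poly: "(\<Prod>i\<in>S. [:f i:]) = [:\<Prod>i\<in>S. f i:]"
  by (induction S rule: infinite_finite_induct) (simp_all add: one_pCons mult.commute)

lemma mmap_Em: "f 0 = 0 \<Longrightarrow> f 1 = 1 \<Longrightarrow> mmap f (Em a w) = Em (f a) (f w)"
  by (rule m2_eqI) (simp_all add: Em_def)

definition TP :: "nat \<Rightarrow> 'a::comm_ring_1 \<Rightarrow> 'a \<Rightarrow> 'a \<Rightarrow> 'a \<Rightarrow> 'a \<Rightarrow> 'a \<Rightarrow> 'a poly" where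
  "TP p a1 a2 a3 b1 b2 b3 = tr (PP (\<lambda>n. blk [:a1:] [:a2:] [:a3:] [:b1:] [:b2:] [:b3:] ([:of_nat n:] + cX)) p)"

lemma poly_TP: "poly (TP p a1 a2 a3 b1 b2 b3) x = Jt p a1 a2 a3 b1 b2 b3 x"
proof -
  let ?f = "\<lambda>q. poly q x"
  have hom: "\<And>a b. ?f (a + b) = ?f a + ?f b" "\<And>a b. ?f (a * b) = ?f a * ?f b" "?f 0 = 0" "?f 1 = 1"
    by simp_all
  have blkm: "mmap ?f (blk [:a1:] [:a2:] [:a3:] [:b1:] [:b2:] [:b3:] [:z, 1:]) = blk a1 a2 a3 b1 b2 b3 (z + x)" for z
    by (simp add: blk_def mmap_mult[OF hom(1,2)] mmap_Em[OF hom(3,4)] algebra_simps)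
  have "poly (TP p a1 a2 a3 b1 b2 b3) x = tr (mmap ?f (PP (\<lambda>n. blk [:a1:] [:a2:] [:a3:] [:b1:] [:b2:] [:b3:] ([:of_nat n:] + cX)) p))"
    by (simp add: TP_def tr_mmap[OF hom(1)])
  also have "\<dots> = Jt p a1 a2 a3 b1 b2 b3 x"
    by (simp add: mmap_PP[OF hom] blkm Jt_def)
  finally show ?thesis .
qed

lemma TP_periodic:
  assumes "of_nat p = (0::'a::comm_ring_1)"
  shows "pcompose (TP p a1 a2 a3 b1 b2 b3) [:1,1:] = (TP p a1 a2 a3 b1 b2 b3 :: 'a poly)"
proof -
  let ?f = "\<lambda>q. pcompose q [:1::'a,1:]"
  have hom: "\<And>a b. ?f (a + b) = ?f a + ?f b" "\<And>a b. ?f (a * b) = ?f a * ?f b" "?f 0 = 0" "?f 1 = 1"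
    by (simp_all add: pcompose_add pcompose_mult pcompose_1)
  define F where "F = (\<lambda>n. blk [:a1:] [:a2:] [:a3:] [:b1:] [:b2:] [:b3:] ([:of_nat n:] + (cX :: 'a poly)))"
  have sh: "?f [:c, 1:] = [:c + 1, 1:]" for c :: 'a
    by (simp add: pcompose_pCons)
  have blkm: "mmap ?f (F n) = F (Suc n)" for n
    by (simp add: F_def blk_def mmap_mult[OF hom(1,2)] mmap_Em[OF hom(3,4)] sh add_ac)
  have "pcompose (TP p a1 a2 a3 b1 b2 b3) [:1,1:] = tr (mmap ?f (PP F p))"
    by (simp only: TP_def F_def tr_mmap[OF hom(1)])
  also have "\<dots> = tr (PP (\<lambda>n. F (Suc n)) p)"
    by (simp add: mmap_PP[OF hom] blkm)
  also have "\<dots> = tr (PP F p)"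
    by (rule tr_PP_rot) (simp add: F_def assms)
  finally show ?thesis by (simp add: TP_def F_def)
qed

lemma TP_coeff:
  "coeff (TP p a1 a2 a3 b1 b2 b3) k = (\<Sum>d\<in>DS p. wt d * coeff (tr (word (Hc a1 a2 a3 b1 b2 b3) d)) k)"
proof -
  have "TP p a1 a2 a3 b1 b2 b3 = tr (PP (\<lambda>n. \<Sum>c\<in>{0,1,2::nat}. sc ([:of_nat n:]^c) (Hc a1 a2 a3 b1 b2 b3 c)) p)"
    by (simp only: TP_def blk_expand)
  also have "\<dots> = tr (\<Sum>d\<in>DS p. sc (\<Prod>i<p. [:of_nat i:]^(d!i)) (prod_list (rev (map (Hc a1 a2 a3 b1 b2 b3) d))))"
    by (simp only: expand_PP[where z = "\<lambda>n. [:of_nat n:]"])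
  also have "\<dots> = (\<Sum>d\<in>DS p. [:wt d:] * tr (word (Hc a1 a2 a3 b1 b2 b3) d))"
  proof -
    have *: "(\<Prod>i<p. [:of_nat i:]^(d!i)) = [:wt d:]" if "d \<in> DS p" for d
      using that by (simp add: poly_const_pow prod_const_poly wt_def DS_def)
    show ?thesis unfolding tr_sum by (intro sum.cong refl) (simp add: * word_def)
  qed
  finally show ?thesis by (simp add: coeff_sum)
qed

lemma dle_lin': "2 \<le> m \<Longrightarrow> dle [:b, 1:] m"
  by (auto simp: dle_def coeff_pCons split: nat.splits)

lemma wdeg_Gp: "wdeg 1 (Gp a b)"
  by (simp add: wdeg_def Gp_def Em_def dle_const dle_1 dle_lin')

lemma wdeg_Nm: "wdeg (-1) (Nm :: 'a::comm_ring_1 poly m2)"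
  by (simp add: wdeg_def Nm_def dle_1)

lemma wdeg_Hc: "c \<in> {0,1,2} \<Longrightarrow> wdeg (3 - 2 * int c) (Hc a1 a2 a3 b1 b2 b3 c)"
proof -
  assume c: "c \<in> {0,1,2}"
  have W: "wdeg (n + m + k) (A * B * C)" if "wdeg n A" "wdeg m B" "wdeg k C" for n m k A B C
    by (intro wdeg_mult that)
  have h0: "wdeg 3 (Gp a1 b1 * Gp a2 b2 * Gp a3 b3)"
    using W[OF wdeg_Gp wdeg_Gp wdeg_Gp] by simp
  have h1: "wdeg 1 (Nm * Gp a2 b2 * Gp a3 b3 + Gp a1 b1 * Nm * Gp a3 b3 + Gp a1 b1 * Gp a2 b2 * Nm)"
    using W[OF wdeg_Nm wdeg_Gp wdeg_Gp] W[OF wdeg_Gp wdeg_Nm wdeg_Gp] W[OF wdeg_Gp wdeg_Gp wdeg_Nm]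
    by (intro wdeg_add) simp_all
  show ?thesis using c h0 h1 wdeg_Nm by (auto simp: Hc_def)
qed

lemma c_big:
  assumes "d \<in> DS p" "p < 2 * sum_list d"
  shows "coeff (tr (word (Hc a1 a2 a3 b1 b2 b3) d)) p = 0"
proof -
  have "wdeg (3 * int (length d) - 2 * int (sum_list d)) (word (Hc a1 a2 a3 b1 b2 b3) d)"
    using assms(1) by (intro wdeg_word wdeg_Hc) (auto simp: DS_def)
  hence "dle (tr (word (Hc a1 a2 a3 b1 b2 b3) d)) (3 * int (length d) - 2 * int (sum_list d))"
    by (rule wdeg_tr)
  moreover have "3 * int (length d) - 2 * int (sum_list d) < 2 * int p"
    using assms by (simp add: DS_def)
  ultimately show ?thesis by (simp add: dle_def)
qed

lemma TP_dle: "dle (TP p a1 a2 a3 b1 b2 b3) (3 * int p)"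
proof -
  have "wdeg 3 (blk [:a1:] [:a2:] [:a3:] [:b1:] [:b2:] [:b3:] ([:z:] + cX))" for z :: 'a
  proof -
    have e: "blk [:a1:] [:a2:] [:a3:] [:b1:] [:b2:] [:b3:] ([:z:] + cX)
      = Hc a1 a2 a3 b1 b2 b3 0 + sc [:z:] (Hc a1 a2 a3 b1 b2 b3 1) + sc [:z^2:] (Hc a1 a2 a3 b1 b2 b3 2)"
      by (simp only: blk_expand) (simp add: poly_const_pow add.assoc flip: one_pCons)
    have w0: "wdeg 3 (Hc a1 a2 a3 b1 b2 b3 0)" using wdeg_Hc[of 0 a1 a2 a3 b1 b2 b3] by simp
    have w1: "wdeg 3 (Hc a1 a2 a3 b1 b2 b3 1)" using wdeg_Hc[of 1 a1 a2 a3 b1 b2 b3] by (auto elim: wdeg_mono)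
    have w2: "wdeg 3 (Hc a1 a2 a3 b1 b2 b3 2)" using wdeg_Hc[of 2 a1 a2 a3 b1 b2 b3] by (auto elim: wdeg_mono)
    show ?thesis unfolding e
      by (intro wdeg_add wdeg_sc w0 w1 w2)
  qed
  hence "wdeg (3 * int p) (PP (\<lambda>n. blk [:a1:] [:a2:] [:a3:] [:b1:] [:b2:] [:b3:] ([:of_nat n:] + cX)) p)"
    by (intro wdeg_PP) auto
  thus ?thesis unfolding TP_def by (rule wdeg_tr)
qed


lemma tr_Hc0: "tr (Hc a1 a2 a3 b1 b2 b3 0) = [:a1*a2*a3 + a3*b2 + a1*b3 + a2*b1:] + [:a1+a2+a3:] * cX"
  by (simp add: Hc_def Gp_def Em_def tr_def algebra_simps)

lemma pcompose_pow: "pcompose (q ^ n) r = (pcompose q r) ^ n"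
  by (induction n) (simp_all add: pcompose_1 pcompose_mult)

lemma Ghat_coeff:
  fixes a1 a2 a3 b1 b2 b3 :: "'a::field"
  assumes pr: "prime p" and p0: "of_nat p = (0::'a)" and odd: "odd p"
  shows "coeff (tr ((Hc a1 a2 a3 b1 b2 b3 0)^p)) p = (a1+a2+a3)^p"
proof -
  have pp0: "of_nat p = (0::'a poly)" using p0 by (simp add: of_nat_poly)
  have two: "(2::'a) \<noteq> 0"
  proof
    assume "(2::'a) = 0"
    hence "of_nat 2 = (0::'a)" by simp
    hence "p dvd 2" using of_nat_zero_iff[OF pr p0] by blast
    hence "p \<le> 2" by (simp add: dvd_imp_le)
    moreover have "p \<ge> 2" using pr prime_ge_2_nat by blast
    ultimately show False using odd by auto
  qed
  have h: "2 * [:inverse 2:] = (1::'a poly)"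
    using two by (simp add: numeral_poly one_pCons)
  have "tr ((Hc a1 a2 a3 b1 b2 b3 0)^p) = (tr (Hc a1 a2 a3 b1 b2 b3 0))^p"
    by (rule tr_pow_p[OF pr pp0 odd h])
  also have "\<dots> = [:a1*a2*a3 + a3*b2 + a1*b3 + a2*b1:]^p + ([:a1+a2+a3:] * cX)^p"
    by (simp only: tr_Hc0 frob[OF pr pp0])
  also have "\<dots> = [:(a1*a2*a3 + a3*b2 + a1*b3 + a2*b1)^p:] + [:(a1+a2+a3)^p:] * monom 1 p"
    by (simp only: power_mult_distrib poly_const_pow cX_pow)
  finally show ?thesis using pr prime_gt_0_nat by (simp add: coeff_pCons split: nat.splits)
qed

lemma lemmaX_odd:
  fixes a1 a2 a3 b1 b2 b3 x :: "'a::field"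
  assumes pr: "prime p" and p0: "of_nat p = (0::'a)" and odd: "odd p"
  shows "Jt p a1 a2 a3 b1 b2 b3 x = Jt p a1 a2 a3 b1 b2 b3 0 + (a1+a2+a3)^p * (x^p - x)"
proof -
  define T where "T = TP p a1 a2 a3 b1 b2 b3"
  define t where "t = (a1+a2+a3)^p"
  have pg: "p \<ge> 2" using pr prime_ge_2_nat by blast
  have pp0: "of_nat p = (0::'a poly)" using p0 by (simp add: of_nat_poly)
  have cp: "coeff T p = t"
  proof -
    have "coeff T p = (\<Sum>d\<in>DS p. wt d * coeff (tr (word (Hc a1 a2 a3 b1 b2 b3) d)) p)"
      by (simp add: T_def TP_coeff)
    also have "\<dots> = coeff (tr (word (Hc a1 a2 a3 b1 b2 b3) (replicate p 0))) p"
      by (rule orbit_lemma[OF pr p0 odd]) (simp_all add: tr_word_rotate1 c_big)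
    also have "word (Hc a1 a2 a3 b1 b2 b3) (replicate p 0) = (Hc a1 a2 a3 b1 b2 b3 0)^p"
      by (simp add: word_def)
    finally show ?thesis using Ghat_coeff[OF pr p0 odd] by (simp add: t_def)
  qed
  define h where "h = T - [:coeff T 0:] - [:t:] * (cX^p - cX)"
  have per: "pcompose h [:1,1:] = h"
  proof -
    have A: "pcompose (cX^p - cX) [:1,1:] = ([:1,1:] :: 'a poly)^p - [:1,1:]"
      by (simp add: pcompose_diff pcompose_pow pcompose_pCons)
    have C: "([:1,1:] :: 'a poly) = cX + 1" by (simp add: one_pCons)
    have B: "(cX + 1)^p = cX^p + (1::'a poly)" using frob[OF pr pp0, of cX 1] by simp
    have "pcompose (cX^p - cX) [:1,1:] = (cX^p + 1) - (cX + (1::'a poly))"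
      by (subst A) (simp only: C B)
    hence "pcompose (cX^p - cX) [:1,1:] = cX^p - (cX :: 'a poly)" by simp
    thus ?thesis using TP_periodic[OF p0, of a1 a2 a3 b1 b2 b3]
      by (simp add: h_def T_def pcompose_diff pcompose_mult pcompose_smult)
  qed
  have deg: "degree h < 2 * p"
  proof -
    have "degree h \<le> 2 * p - 1"
    proof (rule degree_le, intro allI impI)
      fix k assume k: "2 * p - 1 < k"
      have "coeff T k = 0"
        using TP_dle[of p a1 a2 a3 b1 b2 b3] k pg unfolding T_def dle_def by auto
      moreover have "coeff (cX^p :: 'a poly) k = 0" using k pg by (simp add: cX_pow)
      moreover have "coeff (cX :: 'a poly) k = 0" using k pg by (simp add: coeff_pCons split: nat.splits)
      ultimately show "coeff h k = 0" using k pg by (simp add: h_def coeff_pCons split: nat.splits)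
    qed
    thus ?thesis using pg by linarith
  qed
  have chp: "coeff h p = 0"
    using cp pg by (simp add: h_def cX_pow coeff_pCons split: nat.splits)
  have "h = [:coeff h 0:]" by (rule periodic_const[OF pr p0 per deg chp])
  moreover have "coeff h 0 = 0" using pg by (simp add: h_def cX_pow)
  ultimately have "h = 0" by simp
  hence Teq: "T = [:coeff T 0:] + [:t:] * (cX^p - cX)" by (simp add: h_def algebra_simps)
  have "Jt p a1 a2 a3 b1 b2 b3 x = poly T x" by (simp add: T_def poly_TP)
  also have "\<dots> = coeff T 0 + t * (x^p - x)" by (subst Teq) simp
  finally have 1: "Jt p a1 a2 a3 b1 b2 b3 x = coeff T 0 + t * (x^p - x)" .
  have "Jt p a1 a2 a3 b1 b2 b3 0 = coeff T 0" by (simp add: T_def poly_TP[symmetric] poly_0_coeff_0)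
  thus ?thesis using 1 by (simp add: t_def)
qed


lemma lemmaX_2:
  fixes a1 a2 a3 b1 b2 b3 x :: "'a::comm_ring_1"
  assumes two: "(2::'a) = 0"
  shows "Jt 2 a1 a2 a3 b1 b2 b3 x = Jt 2 a1 a2 a3 b1 b2 b3 0 + (1 + (a1+a2+a3)^2) * (x^2 - x)"
proof -
  have PP2: "PP F 2 = F 1 * F 0" for F :: "nat \<Rightarrow> 'a m2" by (simp add: numeral_2_eq_2)
  have "Jt 2 a1 a2 a3 b1 b2 b3 x = Jt 2 a1 a2 a3 b1 b2 b3 0 + (1 + (a1+a2+a3)^2) * (x^2 - x)
     + 2 * (x + x^2 + x^3 + b3*x + b3*x^2 + b2*x + b2*x^2 + b2*b3*x + b1*x + b1*x^2 + b1*b3*x + b1*b2*x + a3^2*x + a3^2*b2*x + 2*a2*a3*x + a2*a3*b2*x + a2*a3*b1*x + a2^2*x + a2^2*b1*x + 2*a1*a3*x + a1*a3*b3*x + a1*a3*b2*x + 2*a1*a2*x + a1*a2*b3*x + a1*a2*b1*x + a1*a2*a3^2*x + a1*a2^2*a3*x + a1^2*x + a1^2*b3*x + a1^2*a2*a3*x)"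
    unfolding Jt_def PP2 by (simp add: blk_def Em_def tr_def algebra_simps power2_eq_square power3_eq_cube)
  thus ?thesis using two by simp
qed


definition t2m :: "'a mat2 \<Rightarrow> 'a m2" where "t2m X = (case X of (a, b, c, d) \<Rightarrow> M2 a b c d)"

lemma t2m_mmul2: "t2m (mmul2 X Y) = t2m X * t2m Y"
  by (cases X; cases Y) (auto simp: t2m_def intro!: m2_eqI)

lemma tr2_t2m: "tr2 X = tr (t2m X)"
  by (cases X) (simp add: t2m_def tr_def)

lemma t2m_id2: "t2m id2 = (1 :: 'a::comm_ring_1 m2)"
  by (simp add: t2m_def id2_def one_m2_def)

lemma t2m_tuple: "t2m (a, b, c, d) = M2 a b c d" by (simp add: t2m_def)

lemma prodA_PP: "t2m (prodA w f g a1 a2 t n) = PP (\<lambda>i. t2m (Amat w f g a1 a2 t (of_nat i))) n"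
  by (induction n) (simp_all add: t2m_id2 t2m_mmul2)

lemma Ip_Jt:
  fixes w f g a1 a2 t :: "'a::field"
  assumes w: "w \<noteq> 0" and p0: "of_nat p = (0::'a)"
  shows "Ip p w f g a1 a2 t = Jt p g (-f) (f - g + t) a2 0 (-a1) 0"
proof -
  define Wm where "Wm = M2 w 0 0 (1::'a)"
  define Wi where "Wi = M2 (inverse w) 0 0 (1::'a)"
  define L where "L z = M2 1 0 (f - t*f*g - t*z) (1::'a)" for z
  define Bb where "Bb z = Em g (z + a2) * Em (-f) (z + 0) * M2 (t*z - g + t*f*g) 1 (z - a1) (0::'a)" for z
  have WW: "Wm * Wi = 1" "Wi * Wm = 1" using w by (auto simp: Wm_def Wi_def intro!: m2_eqI)
  have A: "t2m (Amat w f g a1 a2 t z) = Wm * (L z * Bb z) * Wi" for z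
    by (rule m2_eqI) (simp_all add: Amat_def t2m_def Wm_def Wi_def L_def Bb_def Em_def algebra_simps)
  have "Ip p w f g a1 a2 t = tr (PP (\<lambda>i. Wm * (L (of_nat i) * Bb (of_nat i)) * Wi) p)"
    by (simp add: Ip_def tr2_t2m prodA_PP A)
  also have "\<dots> = tr (Wm * PP (\<lambda>i. L (of_nat i) * Bb (of_nat i)) p * Wi)"
    by (simp only: PP_conj[OF WW])
  also have "\<dots> = tr (PP (\<lambda>i. L (of_nat i) * Bb (of_nat i)) p)"
    by (simp add: tr_mult_comm[of Wm] mult.assoc WW)
  also have "\<dots> = tr (PP (\<lambda>i. Bb (of_nat i) * L (of_nat i - 1)) p)"
    by (rule tr_PP_regroup[OF p0])
  also have "\<dots> = Jt p g (-f) (f - g + t) a2 0 (-a1) 0"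
    unfolding Jt_def
  proof (intro arg_cong[where f = tr] PP_cong)
    fix i
    have "M2 (t*z - g + t*f*g) 1 (z - a1) 0 * L (z - 1) = Em (f - g + t) (z + -a1)" for z
      by (rule m2_eqI) (simp_all add: L_def Em_def algebra_simps)
    thus "Bb (of_nat i) * L (of_nat i - 1) = blk g (-f) (f - g + t) a2 0 (-a1) (of_nat i + 0)"
      by (simp add: Bb_def blk_def mult.assoc)
  qed
  finally show ?thesis .
qed

lemma Jt_regroup:
  fixes a1 a2 a3 b1 b2 b3 x :: "'a::comm_ring_1"
  assumes "of_nat p = (0::'a::comm_ring_1)"
  shows "Jt p a1 a2 a3 b1 b2 b3 x = tr (PP (\<lambda>i. Em a3 (of_nat i + x + b3) * (Em a1 (of_nat i - 1 + x + b1) * Em a2 (of_nat i - 1 + x + b2))) p)"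
proof -
  have "Jt p a1 a2 a3 b1 b2 b3 x = tr (PP (\<lambda>i. (\<lambda>z. Em a1 (z + x + b1) * Em a2 (z + x + b2)) (of_nat i) * (\<lambda>z. Em a3 (z + x + b3)) (of_nat i)) p)"
    by (simp add: Jt_def blk_def)
  also have "\<dots> = tr (PP (\<lambda>i. (\<lambda>z. Em a3 (z + x + b3)) (of_nat i) * (\<lambda>z. Em a1 (z + x + b1) * Em a2 (z + x + b2)) (of_nat i - 1)) p)"
    by (rule tr_PP_regroup[OF assms, of "\<lambda>z. Em a1 (z + x + b1) * Em a2 (z + x + b2)" "\<lambda>z. Em a3 (z + x + b3)"])
  finally show ?thesis by simp
qed

lemma Jt_regroup1:
  fixes a1 a2 a3 b1 b2 b3 x :: "'a::comm_ring_1"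
  assumes "of_nat p = (0::'a::comm_ring_1)"
  shows "Jt p a1 a2 a3 b1 b2 b3 x = tr (PP (\<lambda>i. Em a2 (of_nat i + x + b2) * Em a3 (of_nat i + x + b3) * Em a1 (of_nat i - 1 + x + b1)) p)"
proof -
  have "Jt p a1 a2 a3 b1 b2 b3 x = tr (PP (\<lambda>i. (\<lambda>z. Em a1 (z + x + b1)) (of_nat i) * (\<lambda>z. Em a2 (z + x + b2) * Em a3 (z + x + b3)) (of_nat i)) p)"
    by (simp add: Jt_def blk_def mult.assoc)
  also have "\<dots> = tr (PP (\<lambda>i. (\<lambda>z. Em a2 (z + x + b2) * Em a3 (z + x + b3)) (of_nat i) * (\<lambda>z. Em a1 (z + x + b1)) (of_nat i - 1)) p)"
    by (rule tr_PP_regroup[OF assms, of "\<lambda>z. Em a1 (z + x + b1)" "\<lambda>z. Em a2 (z + x + b2) * Em a3 (z + x + b3)"])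
  finally show ?thesis by simp
qed


lemma lemmaX:
  fixes a1 a2 a3 b1 b2 b3 x :: "'a::field"
  assumes pr: "prime p" and p0: "of_nat p = (0::'a)"
  shows "Jt p a1 a2 a3 b1 b2 b3 x = Jt p a1 a2 a3 b1 b2 b3 0
     + (if p = 2 then 1 + (a1+a2+a3)^2 else (a1+a2+a3)^p) * (x^p - x)"
proof (cases "p = 2")
  case True
  hence "(2::'a) = 0" using p0 by simp
  hence "Jt 2 a1 a2 a3 b1 b2 b3 x = Jt 2 a1 a2 a3 b1 b2 b3 0 + (1 + (a1+a2+a3)^2) * (x^2 - x)"
    by (rule lemmaX_2)
  thus ?thesis using True by simp
next
  case False
  have "p > 2" using False pr prime_ge_2_nat by (metis le_neq_implies_less)
  hence "odd p" using pr prime_odd_nat by blast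
  hence "Jt p a1 a2 a3 b1 b2 b3 x = Jt p a1 a2 a3 b1 b2 b3 0 + (a1+a2+a3)^p * (x^p - x)"
    by (rule lemmaX_odd[OF pr p0])
  thus ?thesis using False by simp
qed

lemma Em_move:
  fixes a :: "'a::field"
  assumes "a \<noteq> 0"
  shows "Em a u * Em a' v = M2 1 0 ((u - v)/a) 1 * Em a v * Em (a' + (v - u)/a) u"
  using assms by (intro m2_eqI) (simp_all add: Em_def field_simps)

lemma Em_L: "Em c w * M2 1 0 y 1 = Em (c + y) w"
  by (intro m2_eqI) (simp_all add: Em_def)

lemma swap3:
  fixes a2 :: "'a::field"
  assumes "a2 \<noteq> 0"
  shows "Em a1 w * Em a2 u * Em a3 v = Em (a1 + (u - v)/a2) w * Em a2 v * Em (a3 + (v - u)/a2) u"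
proof -
  have "Em a1 w * Em a2 u * Em a3 v = Em a1 w * (Em a2 u * Em a3 v)" by (simp add: mult.assoc)
  also have "\<dots> = (Em a1 w * M2 1 0 ((u - v)/a2) 1) * Em a2 v * Em (a3 + (v - u)/a2) u"
    by (subst Em_move[OF assms]) (simp only: mult.assoc)
  finally show ?thesis by (simp add: Em_L)
qed

lemma Em3_cong:
  "a1 = b1 \<Longrightarrow> w1 = x1 \<Longrightarrow> a2 = b2 \<Longrightarrow> w2 = x2 \<Longrightarrow> a3 = b3 \<Longrightarrow> w3 = x3 \<Longrightarrow>
   Em a1 w1 * Em a2 w2 * Em a3 w3 = Em b1 x1 * Em b2 x2 * Em b3 x3"
  by simp

lemma s1_J:
  fixes F G A1 A2 T w :: "'a::field"
  assumes w: "w \<noteq> 0" and p0: "of_nat p = (0::'a)" and F: "F \<noteq> 0"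
  shows "Ip p w F (G - A1 / F) (- A1) (A1 + A2) T = Jt p G (-F) (F - G + T) A2 0 (-A1) A1"
proof -
  have "Ip p w F (G - A1 / F) (- A1) (A1 + A2) T = Jt p (G - A1/F) (-F) (F - (G - A1/F) + T) (A1 + A2) 0 (-(-A1)) 0"
    by (rule Ip_Jt[OF w p0])
  also have "\<dots> = Jt p G (-F) (F - G + T) A2 0 (-A1) A1"
    unfolding Jt_def
  proof (intro arg_cong[where f = tr] PP_cong)
    fix i
    define z where "z = (of_nat i :: 'a)"
    have nF: "-F \<noteq> 0" using F by simp
    have "blk (G - A1/F) (-F) (F - (G - A1/F) + T) (A1 + A2) 0 (-(-A1)) (z + 0)
        = blk G (-F) (F - G + T) A2 0 (-A1) (z + A1)"
      unfolding blk_def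
      by (rule trans[OF swap3[OF nF]], rule Em3_cong) (use F in \<open>simp_all add: field_simps\<close>)
    thus "blk (G - A1/F) (-F) (F - (G - A1/F) + T) (A1 + A2) 0 (-(-A1)) (of_nat i + 0)
        = blk G (-F) (F - G + T) A2 0 (-A1) (of_nat i + A1)" by (simp add: z_def)
  qed
  finally show ?thesis .
qed

lemma s2_J:
  fixes F G A1 A2 T w :: "'a::field"
  assumes w: "w \<noteq> 0" and p0: "of_nat p = (0::'a)" and G: "G \<noteq> 0"
  shows "Ip p w (F + A2 / G) G (A1 + A2) (- A2) T = Jt p G (-F) (F - G + T) A2 0 (-A1) (-A2)"
proof -
  have "Ip p w (F + A2 / G) G (A1 + A2) (- A2) T = Jt p G (-(F + A2/G)) ((F + A2/G) - G + T) (-A2) 0 (-(A1 + A2)) 0"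
    by (rule Ip_Jt[OF w p0])
  also have "\<dots> = Jt p G (-F) (F - G + T) A2 0 (-A1) (-A2)"
    unfolding Jt_regroup[OF p0]
  proof (intro arg_cong[where f = tr] PP_cong)
    fix i
    define z where "z = (of_nat i :: 'a)"
    have "Em ((F + A2/G) - G + T) (z + 0 + -(A1 + A2)) * Em G (z - 1 + 0 + -A2) * Em (-(F + A2/G)) (z - 1 + 0 + 0)
       = Em (F - G + T) (z + -A2 + -A1) * Em G (z - 1 + -A2 + A2) * Em (-F) (z - 1 + -A2 + 0)"
      by (rule trans[OF swap3[OF G]], rule Em3_cong) (use G in \<open>simp_all add: field_simps\<close>)
    thus "Em ((F + A2/G) - G + T) (of_nat i + 0 + -(A1 + A2)) * (Em G (of_nat i - 1 + 0 + -A2) * Em (-(F + A2/G)) (of_nat i - 1 + 0 + 0))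
       = Em (F - G + T) (of_nat i + -A2 + -A1) * (Em G (of_nat i - 1 + -A2 + A2) * Em (-F) (of_nat i - 1 + -A2 + 0))"
      by (simp add: z_def mult.assoc)
  qed
  finally show ?thesis .
qed

lemma pi_J:
  fixes F G A1 A2 T w :: "'a::field"
  assumes w: "w \<noteq> 0" and p0: "of_nat p = (0::'a)"
  shows "Ip p w (- G) (F - G + T) A2 (1 - A1 - A2) T = Jt p G (-F) (F - G + T) A2 0 (-A1) (1 - A2)"
proof -
  have "Ip p w (- G) (F - G + T) A2 (1 - A1 - A2) T = Jt p (F - G + T) (-(-G)) ((-G) - (F - G + T) + T) (1 - A1 - A2) 0 (-A2) 0"
    by (rule Ip_Jt[OF w p0])
  also have "\<dots> = Jt p G (-F) (F - G + T) A2 0 (-A1) (1 - A2)"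
    unfolding Jt_regroup[OF p0, of _ _ _ _ _ _ "1 - A2"]
    unfolding Jt_def
  proof (intro arg_cong[where f = tr] PP_cong)
    fix i
    show "blk (F - G + T) (-(-G)) ((-G) - (F - G + T) + T) (1 - A1 - A2) 0 (-A2) (of_nat i + 0)
       = Em (F - G + T) (of_nat i + (1 - A2) + -A1) * (Em G (of_nat i - 1 + (1 - A2) + A2) * Em (-F) (of_nat i - 1 + (1 - A2) + 0))"
      unfolding blk_def mult.assoc[symmetric] by (rule Em3_cong) (simp_all add: algebra_simps)
  qed
  finally show ?thesis .
qed

lemma s0_J:
  fixes F G A1 A2 T w :: "'a::field"
  assumes w: "w \<noteq> 0" and p0: "of_nat p = (0::'a)" and D: "F - G + T \<noteq> 0"
  shows "Ip p w (F + (A1 + A2 - 1) / (F - G + T)) (G + (A1 + A2 - 1) / (F - G + T)) (1 - A2) (1 - A1) T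
       = Jt p G (-F) (F - G + T) A2 0 (-A1) 0"
proof -
  define d where "d = (A1 + A2 - 1) / (F - G + T)"
  have "Ip p w (F + d) (G + d) (1 - A2) (1 - A1) T = Jt p (G + d) (-(F + d)) ((F + d) - (G + d) + T) (1 - A1) 0 (-(1 - A2)) 0"
    by (rule Ip_Jt[OF w p0])
  also have "\<dots> = Jt p G (-F) (F - G + T) A2 0 (-A1) 0"
    unfolding Jt_regroup1[OF p0]
  proof (intro arg_cong[where f = tr] PP_cong)
    fix i
    define z where "z = (of_nat i :: 'a)"
    have a0: "(F + d) - (G + d) + T \<noteq> 0" using D by simp
    have dd: "(A1 + A2 - 1) / (F - G + T) = d" by (simp add: d_def)
    have "Em (-(F + d)) (z + 0 + 0) * Em ((F + d) - (G + d) + T) (z + 0 + -(1 - A2)) * Em (G + d) (z - 1 + 0 + (1 - A1))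
       = Em (-F) (z + 0 + 0) * Em (F - G + T) (z + 0 + -A1) * Em G (z - 1 + 0 + A2)"
    proof (rule trans[OF swap3[OF a0]], rule Em3_cong)
      have m: "F + d - (G + d) + T = F - G + T" by simp
      have n1: "z + 0 + - (1 - A2) - (z - 1 + 0 + (1 - A1)) = A1 + A2 - 1" by (simp add: algebra_simps)
      have "(z + 0 + - (1 - A2) - (z - 1 + 0 + (1 - A1))) / (F + d - (G + d) + T) = (A1 + A2 - 1) / (F - G + T)"
        by (simp only: n1 m)
      thus "- (F + d) + (z + 0 + - (1 - A2) - (z - 1 + 0 + (1 - A1))) / (F + d - (G + d) + T) = - F"
        using dd by simp
      have n2: "z - 1 + 0 + (1 - A1) - (z + 0 + - (1 - A2)) = - (A1 + A2 - 1)" by (simp add: algebra_simps)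
      have "(z - 1 + 0 + (1 - A1) - (z + 0 + - (1 - A2))) / (F + d - (G + d) + T) = - ((A1 + A2 - 1) / (F - G + T))"
        by (simp only: n2 m minus_divide_left)
      thus "G + d + (z - 1 + 0 + (1 - A1) - (z + 0 + - (1 - A2))) / (F + d - (G + d) + T) = G"
        using dd by simp
    qed (simp_all add: algebra_simps)
    thus "Em (-(F + d)) (of_nat i + 0 + 0) * Em ((F + d) - (G + d) + T) (of_nat i + 0 + -(1 - A2)) * Em (G + d) (of_nat i - 1 + 0 + (1 - A1))
       = Em (-F) (of_nat i + 0 + 0) * Em (F - G + T) (of_nat i + 0 + -A1) * Em G (of_nat i - 1 + 0 + A2)"
      by (simp add: z_def)
  qed
  finally show ?thesis unfolding d_def .
qed


lemma ratfun_p0: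
  assumes "CHAR('k::field) = p"
  shows "of_nat p = (0::'k ratfun5)"
proof -
  have "CHAR('k poly5) = p" using assms by simp
  hence "of_nat p = (0::'k poly5)" by (metis of_nat_CHAR)
  thus ?thesis by (simp add: of_nat_fract Zero_fract_def)
qed

lemma Fract1_nz: "(a::'k::field poly5) \<noteq> 0 \<Longrightarrow> Fract a 1 \<noteq> 0"
  by (simp add: Zero_fract_def eq_fract)

lemma varF_nz: "(varF :: 'k::field ratfun5) \<noteq> 0"
  unfolding varF_def by (rule Fract1_nz) (simp add: monom_eq_0_iff)

lemma varG_nz: "(varG :: 'k::field ratfun5) \<noteq> 0"
  unfolding varG_def by (rule Fract1_nz) (simp add: monom_eq_0_iff)

lemma varD_nz: "(varF - varG + varT :: 'k::field ratfun5) \<noteq> 0"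
proof -
  define P where "P = ([:[:[:[:monom 1 1:]:]:]:] - [:[:[:monom 1 1:]:]:] + monom 1 1 :: 'k poly5)"
  have "varF - varG + varT = (Fract P 1 :: 'k ratfun5)"
    by (simp add: varF_def varG_def varT_def P_def)
  moreover have "coeff P 1 = 1" by (simp add: P_def)
  hence "P \<noteq> 0" by auto
  ultimately show ?thesis using Fract1_nz by metis
qed

theorem theorem3p6:
  fixes w :: "'k::field ratfun5"
  assumes "prime p" and "CHAR('k) = p" and "w \<noteq> 0"
  shows "let F = (varF :: 'k ratfun5); G = varG; A1 = varA1; A2 = varA2; T = varT;
             I = Ip p w F G A1 A2 T;
             c = (if p = 2 then 1 + T^2 else T^p)
         in Ip p w (F + (A1 + A2 - 1) / (F - G + T)) (G + (A1 + A2 - 1) / (F - G + T))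
               (1 - A2) (1 - A1) T = I
          \<and> Ip p w F (G - A1 / F) (- A1) (A1 + A2) T = I + c * (A1^p - A1)
          \<and> Ip p w (F + A2 / G) G (A1 + A2) (- A2) T = I - c * (A2^p - A2)
          \<and> Ip p w (- G) (F - G + T) A2 (1 - A1 - A2) T = I - c * (A2^p - A2)"
proof -
  have pr: "prime p" by (rule assms(1))
  have p0: "of_nat p = (0::'k ratfun5)" by (rule ratfun_p0[OF assms(2)])
  have chp: "CHAR('k ratfun5) = p" by (rule char_eq_p[OF pr p0])
  define F where "F = (varF :: 'k ratfun5)"
  define G where "G = (varG :: 'k ratfun5)"
  define A1 where "A1 = (varA1 :: 'k ratfun5)"
  define A2 where "A2 = (varA2 :: 'k ratfun5)"
  define T where "T = (varT :: 'k ratfun5)"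
  define c where "c = (if p = 2 then 1 + T^2 else T^p)"
  define J where "J x = Jt p G (-F) (F - G + T) A2 0 (-A1) x" for x
  have F0: "F \<noteq> 0" by (simp add: F_def varF_nz)
  have G0: "G \<noteq> 0" by (simp add: G_def varG_nz)
  have D0: "F - G + T \<noteq> 0" by (simp add: F_def G_def T_def varD_nz)
  have I: "Ip p w F G A1 A2 T = J 0" by (simp add: J_def Ip_Jt[OF assms(3) p0])
  have LX: "J x = J 0 + c * (x^p - x)" for x
  proof -
    have "G + - F + (F - G + T) = T" by simp
    thus ?thesis using lemmaX[OF pr p0, of G "-F" "F - G + T" A2 0 "-A1" x]
      by (simp add: J_def c_def)
  qed
  have c1: "Ip p w (F + (A1 + A2 - 1) / (F - G + T)) (G + (A1 + A2 - 1) / (F - G + T)) (1 - A2) (1 - A1) T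
      = Ip p w F G A1 A2 T"
    using s0_J[OF assms(3) p0 D0] by (simp add: I J_def)
  have c2: "Ip p w F (G - A1 / F) (- A1) (A1 + A2) T = Ip p w F G A1 A2 T + c * (A1^p - A1)"
    using s1_J[OF assms(3) p0 F0] LX[of A1] by (simp add: I J_def)
  have c3: "Ip p w (F + A2 / G) G (A1 + A2) (- A2) T = Ip p w F G A1 A2 T - c * (A2^p - A2)"
  proof -
    have m: "(- A2)^p = - (A2^p)" by (rule minus_power_prime_CHAR[OF chp[symmetric] pr])
    have "Ip p w (F + A2 / G) G (A1 + A2) (- A2) T = J (-A2)"
      using s2_J[OF assms(3) p0 G0] by (simp add: J_def)
    also have "\<dots> = J 0 + c * ((-A2)^p - (-A2))" by (rule LX)
    also have "\<dots> = Ip p w F G A1 A2 T - c * (A2^p - A2)" by (simp add: m I algebra_simps)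
    finally show ?thesis .
  qed
  have c4: "Ip p w (- G) (F - G + T) A2 (1 - A1 - A2) T = Ip p w F G A1 A2 T - c * (A2^p - A2)"
  proof -
    have m: "(1 - A2)^p = 1 - A2^p" using frob_diff[OF pr p0, of 1 A2] by simp
    have "Ip p w (- G) (F - G + T) A2 (1 - A1 - A2) T = J (1 - A2)"
      using pi_J[OF assms(3) p0] by (simp add: J_def)
    also have "\<dots> = J 0 + c * ((1 - A2)^p - (1 - A2))" by (rule LX)
    also have "\<dots> = Ip p w F G A1 A2 T - c * (A2^p - A2)" by (simp add: m I algebra_simps)
    finally show ?thesis .
  qed
  show ?thesis
    unfolding Let_def using c1 c2 c3 c4 by (simp add: F_def G_def A1_def A2_def T_def c_def)
qed


end
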